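(* Let $A\in\mathscr{D}\mathrm{iag}$ with $L(A)>0$. There exist a neighborhood $\mathscr{N}_A$ of $A$ in $\mathrm{SL}_2(\mathbb{R})^k$, such that $B_i$ is hyperbolic for all $B\in\mathscr{N}_A$ and $i\in\Sigma_H(A)$, and a constant $C=C(A)<\infty$ such that for all $B\in\mathscr{N}_A$, $$d(B,\mathscr{D}\mathrm{iag})\le C\rho(B)\quad\text{and}\quad \rho(B)\le C\,d(B,A).$$ In particular, for every $B\in\mathscr{N}_A$, either $d(B,\mathscr{D}\mathrm{iag})\le C\rho_-(B)$ or $d(B,\mathscr{D}\mathrm{iag})\le C\rho_-(B^{-1})$.
   Context: $\mathrm{SL}_2(\mathbb{R})$ denotes real $2\times2$ matrices with determinant $\pm1$. $\Sigma=\{1,\dots,k\}$, $p=(p_1,\dots,p_k)$ a probability vector with positive entries, and for cocycles $B=(B_1,\dots,B_k)$, $d(A,B)=\max_j\|A_j-B_j\|$; $L(B)$ is the Lyapunov exponent of the i.i.d. product $B_{x_{n-1}}\cdots B_{x_0}$ with $x_j$ distributed by $p$. $\mathscr{D}\mathrm{iag}$ is the set of cocycles with two transversal lines invariant under all matrices; $d(B,\mathscr{D}\mathrm{iag})=\inf_{D\in\mathscr{D}\mathrm{iag}}d(B,D)$. $B^{-1}=(B_1^{-1},\dots,B_k^{-1})$. Projective space $\mathbb{P}=\mathbb{P}(\mathbb{R}^2)$ with metric $d(\hat p,\hat q)=|\sin\angle(p,q)|$; $\hat g$ denotes the projective action of $g$. For $A\in\mathscr{D}\mathrm{iag}$ with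 $L(A)>0$, let $e_+(A),e_-(A)$ be unit vectors spanning the two invariant lines, on which the restricted exponents are $L(A)$ and $-L(A)$ respectively, and let $a_j$ be defined by $A_je_+(A)=a_je_+(A)$; set $\Sigma_H(A)=\{i:|a_i|\ge e^{L(A)}\}$. A matrix $g$ is hyperbolic if it has real eigenvalues of modulus $>1$ and $<1$; $\hat e_+(g),\hat e_-(g)$ denote the corresponding eigendirections. For $B$ with $B_i$ hyperbolic for all $i\in\Sigma_H(A)$: $\rho_\pm(B)=\max_{i\in\Sigma_H(A)}\max_{1\le j\le k}d(\hat B_j\hat e_\pm(B_i),\hat e_\pm(B_i))$ and $\rho(B)=\max\{\rho_-(B),\rho_+(B)\}$; $\rho_-(B^{-1})$ is defined in the same way with $B_j^{-1}$ in place of $B_j$ (same index set $\Sigma_H(A)$). *)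

theory Defs
  imports "HOL-Analysis.Analysis"
begin

type_synonym mat2 = "real^2^2"

definition mnorm :: "mat2 \<Rightarrow> real" where
  "mnorm M = onorm (\<lambda>x. M *v x)"

text \<open>SL_2(R) in the paper's convention: determinant +1 or -1; cocycles indexed by a finite type.\<close>
definition SL2k :: "('k::finite \<Rightarrow> mat2) set" where
  "SL2k = {B. \<forall>j. \<bar>det (B j)\<bar> = 1}"

definition dcoc :: "('k::finite \<Rightarrow> mat2) \<Rightarrow> ('k \<Rightarrow> mat2) \<Rightarrow> real" where
  "dcoc A B = Max (range (\<lambda>j. mnorm (A j - B j)))"

text \<open>Product B_{x_{n-1}} ... B_{x_0} for the word w = [x_0, ..., x_{n-1}].\<close>
definition word_prod :: "('k \<Rightarrow> mat2) \<Rightarrow> 'k list \<Rightarrow> mat2" where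
  "word_prod B w = foldl (\<lambda>M x. B x ** M) (mat 1) w"

text \<open>Lyapunov exponent of the i.i.d. product with law p:
  L(B) = lim (1/n) E log ||B_{x_{n-1}} ... B_{x_0}||.\<close>
definition lyap :: "('k::finite \<Rightarrow> real) \<Rightarrow> ('k \<Rightarrow> mat2) \<Rightarrow> real" where
  "lyap p B = lim (\<lambda>n. (\<Sum>w\<in>{w::'k list. length w = n}.
        prod_list (map p w) * ln (mnorm (word_prod B w))) / real n)"

definition inv_line :: "('k \<Rightarrow> mat2) \<Rightarrow> real^2 \<Rightarrow> bool" where
  "inv_line A e \<longleftrightarrow> e \<noteq> 0 \<and> (\<forall>j. \<exists>a. A j *v e = a *\<^sub>R e)"

definition line_eig :: "('k \<Rightarrow> mat2) \<Rightarrow> real^2 \<Rightarrow> 'k \<Rightarrow> real" where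
  "line_eig A e j = ((A j *v e) \<bullet> e) / (e \<bullet> e)"

text \<open>Lyapunov exponent of the cocycle restricted to an invariant line
  (for the i.i.d. product this is sum_j p_j log|a_j|).\<close>
definition line_exp :: "('k::finite \<Rightarrow> real) \<Rightarrow> ('k \<Rightarrow> mat2) \<Rightarrow> real^2 \<Rightarrow> real" where
  "line_exp p A e = (\<Sum>j\<in>UNIV. p j * ln \<bar>line_eig A e j\<bar>)"

definition Diag :: "('k::finite \<Rightarrow> mat2) set" where
  "Diag = {A. A \<in> SL2k \<and> (\<exists>u v. inv_line A u \<and> inv_line A v \<and> \<not> (\<exists>c. v = c *\<^sub>R u))}"

definition dDiag :: "('k::finite \<Rightarrow> mat2) \<Rightarrow> real" where
  "dDiag B = Inf {dcoc B D | D. D \<in> Diag}"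

definition e_plus :: "('k::finite \<Rightarrow> real) \<Rightarrow> ('k \<Rightarrow> mat2) \<Rightarrow> real^2" where
  "e_plus p A = (SOME e. norm e = 1 \<and> inv_line A e \<and> line_exp p A e = lyap p A \<and>
      (\<exists>f. norm f = 1 \<and> inv_line A f \<and> \<not> (\<exists>c. f = c *\<^sub>R e) \<and> line_exp p A f = - lyap p A))"

definition Sigma_H :: "('k::finite \<Rightarrow> real) \<Rightarrow> ('k \<Rightarrow> mat2) \<Rightarrow> 'k set" where
  "Sigma_H p A = {i. \<bar>line_eig A (e_plus p A) i\<bar> \<ge> exp (lyap p A)}"

definition hyperbolic :: "mat2 \<Rightarrow> bool" where
  "hyperbolic g \<longleftrightarrow> (\<exists>u v (l::real) (m::real). u \<noteq> 0 \<and> v \<noteq> 0 \<and>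
      g *v u = l *\<^sub>R u \<and> g *v v = m *\<^sub>R v \<and> \<bar>l\<bar> > 1 \<and> \<bar>m\<bar> < 1)"

definition edir_plus :: "mat2 \<Rightarrow> real^2" where
  "edir_plus g = (SOME v. v \<noteq> 0 \<and> (\<exists>l. \<bar>l\<bar> > 1 \<and> g *v v = l *\<^sub>R v))"

definition edir_minus :: "mat2 \<Rightarrow> real^2" where
  "edir_minus g = (SOME v. v \<noteq> 0 \<and> (\<exists>l. \<bar>l\<bar> < 1 \<and> g *v v = l *\<^sub>R v))"

definition pdist :: "real^2 \<Rightarrow> real^2 \<Rightarrow> real" where
  "pdist u v = \<bar>sin (arccos ((u \<bullet> v) / (norm u * norm v)))\<bar>"

definition rho_plus :: "('k::finite \<Rightarrow> real) \<Rightarrow> ('k \<Rightarrow> mat2) \<Rightarrow> ('k \<Rightarrow> mat2) \<Rightarrow> real" where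
  "rho_plus p A B = Max {pdist (B j *v edir_plus (B i)) (edir_plus (B i)) | i j. i \<in> Sigma_H p A}"

definition rho_minus :: "('k::finite \<Rightarrow> real) \<Rightarrow> ('k \<Rightarrow> mat2) \<Rightarrow> ('k \<Rightarrow> mat2) \<Rightarrow> real" where
  "rho_minus p A B = Max {pdist (B j *v edir_minus (B i)) (edir_minus (B i)) | i j. i \<in> Sigma_H p A}"

definition rho :: "('k::finite \<Rightarrow> real) \<Rightarrow> ('k \<Rightarrow> mat2) \<Rightarrow> ('k \<Rightarrow> mat2) \<Rightarrow> real" where
  "rho p A B = max (rho_minus p A B) (rho_plus p A B)"

definition coc_inv :: "('k \<Rightarrow> mat2) \<Rightarrow> ('k \<Rightarrow> mat2)" where
  "coc_inv B = (\<lambda>j. matrix_inv (B j))"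

end

theory Submission
  imports Defs
begin

definition det2 :: "real^2 \<Rightarrow> real^2 \<Rightarrow> real" where
  "det2 u v = u$1 * v$2 - u$2 * v$1"

definition Sm :: "mat2 \<Rightarrow> real" where
  "Sm M = \<bar>M$1$1\<bar> + \<bar>M$1$2\<bar> + \<bar>M$2$1\<bar> + \<bar>M$2$2\<bar>"

lemma vec2_eq: "(u::real^2) = v \<longleftrightarrow> u$1 = v$1 \<and> u$2 = v$2"
  by (auto simp: vec_eq_iff forall_2)

lemma mv1: "(M *v x)$1 = M$1$1 * x$1 + M$1$2 * x$2" for M :: mat2
  by (simp add: matrix_vector_mult_def sum_2)
lemma mv2: "(M *v x)$2 = M$2$1 * x$1 + M$2$2 * x$2" for M :: mat2
  by (simp add: matrix_vector_mult_def sum_2)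

lemma inner2: "(u::real^2) \<bullet> v = u$1 * v$1 + u$2 * v$2"
  by (simp add: inner_vec_def sum_2)

lemma normsq2: "(norm (u::real^2))^2 = (u$1)^2 + (u$2)^2"
  unfolding power2_norm_eq_inner inner2 by (simp add: power2_eq_square)

lemma lagrange2: "(u \<bullet> v)^2 + (det2 u v)^2 = (norm u)^2 * (norm v)^2"
  unfolding normsq2 inner2 det2_def by (simp add: algebra_simps power2_eq_square)

lemma det2_le: "\<bar>det2 u v\<bar> \<le> norm u * norm v"
proof -
  have "(det2 u v)^2 \<le> (norm u * norm v)^2"
    using lagrange2[of u v] zero_le_power2[of "u \<bullet> v"] unfolding power_mult_distrib by linarith
  then have "\<bar>det2 u v\<bar> \<le> \<bar>norm u * norm v\<bar>" by (simp only: abs_le_square_iff)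
  then show ?thesis by simp
qed

lemma det2_swap: "det2 v u = - det2 u v" by (simp add: det2_def)
lemma det2_self[simp]: "det2 u u = 0" by (simp add: det2_def)
lemma det2_scaleR_left[simp]: "det2 (c *\<^sub>R u) v = c * det2 u v" by (simp add: det2_def algebra_simps)
lemma det2_scaleR_right[simp]: "det2 u (c *\<^sub>R v) = c * det2 u v" by (simp add: det2_def algebra_simps)
lemma det2_add_left: "det2 (u + w) v = det2 u v + det2 w v" by (simp add: det2_def algebra_simps)
lemma det2_add_right: "det2 u (v + w) = det2 u v + det2 u w" by (simp add: det2_def algebra_simps)
lemma det2_diff_left: "det2 (u - w) v = det2 u v - det2 w v" by (simp add: det2_def algebra_simps)
lemma det2_diff_right: "det2 u (v - w) = det2 u v - det2 u w" by (simp add: det2_def algebra_simps)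

lemma det2_mult: "det2 (M *v u) (M *v v) = det M * det2 u v"
  by (simp add: det2_def mv1 mv2 det_2 algebra_simps)

lemma trace_ident: "det2 (M *v x) y + det2 x (M *v y) = (M$1$1 + M$2$2) * det2 x y"
  by (simp add: det2_def mv1 mv2 algebra_simps)

lemma decomp2:
  assumes "det2 e f \<noteq> 0"
  shows "x = (det2 x f / det2 e f) *\<^sub>R e + (det2 e x / det2 e f) *\<^sub>R f"
proof -
  let ?D = "e$1 * f$2 - e$2 * f$1"
  have D: "?D \<noteq> 0" using assms by (simp add: det2_def)
  have 1: "x$1 = ((x$1 * f$2 - x$2 * f$1) * e$1 + (e$1 * x$2 - e$2 * x$1) * f$1) / ?D"
    using D by (simp add: field_simps)
  have 2: "x$2 = ((x$1 * f$2 - x$2 * f$1) * e$2 + (e$1 * x$2 - e$2 * x$1) * f$2) / ?D"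
    using D by (simp add: field_simps)
  show ?thesis unfolding vec2_eq det2_def using 1 2 by (simp add: add_divide_distrib)
qed

lemma det2_zero_parallel:
  assumes "u \<noteq> 0" "det2 u v = 0" shows "\<exists>c. v = c *\<^sub>R u"
proof (cases "u$1 = 0")
  case True
  then have "u$2 \<noteq> 0" using assms(1) by (simp add: vec2_eq)
  then show ?thesis using assms True unfolding det2_def
    by (intro exI[of _ "v$2 / u$2"]) (simp add: vec2_eq field_simps)
next
  case False
  then show ?thesis using assms unfolding det2_def
    by (intro exI[of _ "v$1 / u$1"]) (simp add: vec2_eq field_simps)
qed

lemma parallel_det2: "v = c *\<^sub>R u \<Longrightarrow> det2 u v = 0" by simp

lemma pdist_eq:
  assumes "u \<noteq> 0" "v \<noteq> 0"
  shows "pdist u v = \<bar>det2 u v\<bar> / (norm u * norm v)"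
proof -
  have nz: "norm u * norm v > 0" using assms by simp
  have cs: "\<bar>u \<bullet> v\<bar> \<le> norm u * norm v" by (rule Cauchy_Schwarz_ineq2)
  define c where "c = (u \<bullet> v) / (norm u * norm v)"
  have c1: "-1 \<le> c" "c \<le> 1" using cs nz unfolding c_def by (auto simp: abs_le_iff field_simps)
  have "sin (arccos c) = sqrt (1 - c^2)" using c1 by (simp add: sin_arccos)
  also have "1 - c^2 = (det2 u v / (norm u * norm v))^2"
  proof -
    have "(norm u * norm v)^2 > 0" using nz by (simp only: zero_less_power2)
    moreover have "(u \<bullet> v)^2 + (det2 u v)^2 = (norm u * norm v)^2"
      using lagrange2[of u v] by (simp add: power_mult_distrib)
    moreover have "1 - c^2 = ((norm u * norm v)^2 - (u \<bullet> v)^2) / (norm u * norm v)^2"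
      unfolding c_def power_divide using calculation(1) by (simp add: diff_divide_distrib)
    ultimately show ?thesis by (simp add: power_divide)
  qed
  finally have "sin (arccos c) = \<bar>det2 u v\<bar> / (norm u * norm v)"
    using nz by simp
  then show ?thesis unfolding pdist_def c_def by simp
qed


lemma bl_mv: "bounded_linear (\<lambda>x. (M::mat2) *v x)"
  using matrix_vector_mul_bounded_linear[of M] by (simp add: o_def)

lemma mnorm_bound: "norm (M *v x) \<le> mnorm M * norm x"
  unfolding mnorm_def by (rule onorm[OF bl_mv])

lemma mnorm_ge0: "mnorm M \<ge> 0"
  unfolding mnorm_def by (rule onorm_pos_le[OF bl_mv])

lemma entry_le: "\<bar>M$k$l\<bar> \<le> mnorm M" for M :: mat2
proof -
  have "(M *v axis l 1) $ k = M$k$l"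
    by (simp add: matrix_vector_mult_def axis_def if_distrib cong: if_cong)
  moreover have "\<bar>(M *v axis l 1) $ k\<bar> \<le> norm (M *v axis l 1)" by (rule component_le_norm_cart)
  moreover have "norm (M *v axis l 1) \<le> mnorm M" using mnorm_bound[of M "axis l 1"] by simp
  ultimately show ?thesis by simp
qed

lemma norm2_le: "norm (x::real^2) \<le> \<bar>x$1\<bar> + \<bar>x$2\<bar>"
  using norm_le_l1_cart[of x] by (simp add: sum_2)

lemma Sm_bound: "norm (M *v x) \<le> Sm M * norm x"
proof -
  have c1: "\<bar>x$1\<bar> \<le> norm x" "\<bar>x$2\<bar> \<le> norm x" by (rule component_le_norm_cart)+
  have "norm (M *v x) \<le> \<bar>(M *v x)$1\<bar> + \<bar>(M *v x)$2\<bar>" by (rule norm2_le)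
  also have "\<dots> \<le> (\<bar>M$1$1\<bar> * \<bar>x$1\<bar> + \<bar>M$1$2\<bar> * \<bar>x$2\<bar>) + (\<bar>M$2$1\<bar> * \<bar>x$1\<bar> + \<bar>M$2$2\<bar> * \<bar>x$2\<bar>)"
    unfolding mv1 mv2 by (intro add_mono) (simp_all add: abs_mult[symmetric] abs_triangle_ineq)
  also have "\<dots> \<le> (\<bar>M$1$1\<bar> * norm x + \<bar>M$1$2\<bar> * norm x) + (\<bar>M$2$1\<bar> * norm x + \<bar>M$2$2\<bar> * norm x)"
    using c1 by (intro add_mono mult_left_mono) auto
  also have "\<dots> = Sm M * norm x" by (simp add: Sm_def algebra_simps)
  finally show ?thesis .
qed

lemma mnorm_le_Sm: "mnorm M \<le> Sm M"
  unfolding mnorm_def by (rule onorm_le) (rule Sm_bound)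

lemma Sm_ge0: "Sm M \<ge> 0" by (simp add: Sm_def)

lemma Sm_diff: "Sm B \<le> Sm A + 4 * mnorm (B - A)"
proof -
  have "\<And>k l. \<bar>B$k$l\<bar> \<le> \<bar>A$k$l\<bar> + mnorm (B - A)"
  proof -
    fix k l
    have "\<bar>B$k$l - A$k$l\<bar> \<le> mnorm (B - A)" using entry_le[of "B - A" k l] by simp
    then show "\<bar>B$k$l\<bar> \<le> \<bar>A$k$l\<bar> + mnorm (B - A)" by linarith
  qed
  then show ?thesis unfolding Sm_def by (smt (verit))
qed

lemma Sm_inv_bound:
  assumes "\<bar>det M\<bar> = 1"
  shows "norm x \<le> Sm M * norm (M *v x)"
proof -
  let ?y = "M *v x"
  have c: "\<bar>?y$1\<bar> \<le> norm ?y" "\<bar>?y$2\<bar> \<le> norm ?y" by (rule component_le_norm_cart)+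
  have e1: "det M * x$1 = M$2$2 * ?y$1 - M$1$2 * ?y$2" by (simp add: mv1 mv2 det_2 algebra_simps)
  have e2: "det M * x$2 = M$1$1 * ?y$2 - M$2$1 * ?y$1" by (simp add: mv1 mv2 det_2 algebra_simps)
  have "\<bar>x$1\<bar> = \<bar>det M * x$1\<bar>" using assms by (simp add: abs_mult)
  also have "\<dots> \<le> \<bar>M$2$2\<bar> * \<bar>?y$1\<bar> + \<bar>M$1$2\<bar> * \<bar>?y$2\<bar>" unfolding e1
    using abs_triangle_ineq4[of "M$2$2 * ?y$1" "M$1$2 * ?y$2"] by (simp add: abs_mult)
  also have "\<dots> \<le> \<bar>M$2$2\<bar> * norm ?y + \<bar>M$1$2\<bar> * norm ?y"
    using c by (intro add_mono mult_left_mono) auto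
  finally have x1: "\<bar>x$1\<bar> \<le> \<bar>M$2$2\<bar> * norm ?y + \<bar>M$1$2\<bar> * norm ?y" .
  have "\<bar>x$2\<bar> = \<bar>det M * x$2\<bar>" using assms by (simp add: abs_mult)
  also have "\<dots> \<le> \<bar>M$1$1\<bar> * \<bar>?y$2\<bar> + \<bar>M$2$1\<bar> * \<bar>?y$1\<bar>" unfolding e2
    using abs_triangle_ineq4[of "M$1$1 * ?y$2" "M$2$1 * ?y$1"] by (simp add: abs_mult)
  also have "\<dots> \<le> \<bar>M$1$1\<bar> * norm ?y + \<bar>M$2$1\<bar> * norm ?y"
    using c by (intro add_mono mult_left_mono) auto
  finally have x2: "\<bar>x$2\<bar> \<le> \<bar>M$1$1\<bar> * norm ?y + \<bar>M$2$1\<bar> * norm ?y" .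
  have "norm x \<le> \<bar>x$1\<bar> + \<bar>x$2\<bar>" by (rule norm2_le)
  also have "\<dots> \<le> Sm M * norm ?y" using x1 x2 unfolding Sm_def by (simp add: algebra_simps)
  finally show ?thesis .
qed

lemma entry_diff: "\<bar>B$k$l - A$k$l\<bar> \<le> mnorm (B - A)" for A B :: mat2
  using entry_le[of "B - A" k l] by simp

lemma trace_diff: "\<bar>(B$1$1 + B$2$2) - (A$1$1 + A$2$2)\<bar> \<le> 2 * mnorm (B - A)"
  using entry_diff[of B 1 1 A] entry_diff[of B 2 2 A] by linarith

lemma det_diff:
  assumes "mnorm (B - A) \<le> 1"
  shows "\<bar>det B - det A\<bar> \<le> mnorm (B - A) * (Sm A + 2)"
proof -
  let ?d = "mnorm (B - A)"
  have h: "\<And>k l. \<bar>B$k$l - A$k$l\<bar> \<le> ?d" by (rule entry_diff)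
  have hb: "\<And>k l. \<bar>B$k$l\<bar> \<le> \<bar>A$k$l\<bar> + 1" proof -
    fix k l show "\<bar>B$k$l\<bar> \<le> \<bar>A$k$l\<bar> + 1" using h[of k l] assms by linarith
  qed
  have t1: "\<bar>B$1$1 * B$2$2 - A$1$1 * A$2$2\<bar> \<le> ?d * (\<bar>A$2$2\<bar> + 1) + \<bar>A$1$1\<bar> * ?d"
  proof -
    have "B$1$1 * B$2$2 - A$1$1 * A$2$2 = (B$1$1 - A$1$1) * B$2$2 + A$1$1 * (B$2$2 - A$2$2)"
      by (simp add: algebra_simps)
    moreover have "\<bar>(B$1$1 - A$1$1) * B$2$2\<bar> \<le> ?d * (\<bar>A$2$2\<bar> + 1)"
      unfolding abs_mult by (intro mult_mono h hb) (auto simp: mnorm_ge0)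
    moreover have "\<bar>A$1$1 * (B$2$2 - A$2$2)\<bar> \<le> \<bar>A$1$1\<bar> * ?d"
      unfolding abs_mult by (intro mult_mono h) auto
    ultimately show ?thesis by (smt (verit))
  qed
  have t2: "\<bar>B$1$2 * B$2$1 - A$1$2 * A$2$1\<bar> \<le> ?d * (\<bar>A$2$1\<bar> + 1) + \<bar>A$1$2\<bar> * ?d"
  proof -
    have "B$1$2 * B$2$1 - A$1$2 * A$2$1 = (B$1$2 - A$1$2) * B$2$1 + A$1$2 * (B$2$1 - A$2$1)"
      by (simp add: algebra_simps)
    moreover have "\<bar>(B$1$2 - A$1$2) * B$2$1\<bar> \<le> ?d * (\<bar>A$2$1\<bar> + 1)"
      unfolding abs_mult by (intro mult_mono h hb) (auto simp: mnorm_ge0)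
    moreover have "\<bar>A$1$2 * (B$2$1 - A$2$1)\<bar> \<le> \<bar>A$1$2\<bar> * ?d"
      unfolding abs_mult by (intro mult_mono h) auto
    ultimately show ?thesis by (smt (verit))
  qed
  have "\<bar>det B - det A\<bar> \<le> \<bar>B$1$1 * B$2$2 - A$1$1 * A$2$2\<bar> + \<bar>B$1$2 * B$2$1 - A$1$2 * A$2$1\<bar>"
    unfolding det_2 by linarith
  also have "\<dots> \<le> ?d * (Sm A + 2)" using t1 t2 unfolding Sm_def by (simp add: algebra_simps)
  finally show ?thesis .
qed

lemma matrix_inv_props:
  fixes M :: mat2
  assumes "det M \<noteq> 0"
  shows "M ** matrix_inv M = mat 1" "matrix_inv M ** M = mat 1"
proof -
  have "invertible M" using assms by (simp add: invertible_det_nz)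
  then have "\<exists>A'. M ** A' = mat 1 \<and> A' ** M = mat 1" unfolding invertible_def .
  then have "M ** matrix_inv M = mat 1 \<and> matrix_inv M ** M = mat 1"
    unfolding matrix_inv_def by (rule someI_ex)
  then show "M ** matrix_inv M = mat 1" "matrix_inv M ** M = mat 1" by auto
qed

lemma matrix_inv_apply:
  fixes M :: mat2
  assumes "det M \<noteq> 0"
  shows "M *v (matrix_inv M *v x) = x" "matrix_inv M *v (M *v x) = x"
  using matrix_inv_props[OF assms] by (simp_all add: matrix_vector_mul_assoc)

lemma det_matrix_inv:
  fixes M :: mat2
  assumes "\<bar>det M\<bar> = 1"
  shows "\<bar>det (matrix_inv M)\<bar> = 1"
proof -
  have "det M \<noteq> 0" using assms by auto
  then have "det (matrix_inv M ** M) = 1" using matrix_inv_props by simp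
  then have "det (matrix_inv M) * det M = 1" by (simp add: det_mul)
  then have "\<bar>det (matrix_inv M)\<bar> * \<bar>det M\<bar> = 1" by (metis abs_mult abs_one)
  then show ?thesis using assms by simp
qed


definition mk2 :: "real \<Rightarrow> real \<Rightarrow> real^2" where
  "mk2 a b = (\<chi> i. if i = 1 then a else b)"

lemma mk2_1[simp]: "mk2 a b $ 1 = a" and mk2_2[simp]: "mk2 a b $ 2 = b"
  by (simp_all add: mk2_def)

lemma mk2_eq0: "mk2 a b = 0 \<longleftrightarrow> a = 0 \<and> b = 0"
  by (simp add: vec2_eq)

lemma eig_exists:
  fixes M :: mat2
  assumes "r^2 - (M$1$1 + M$2$2) * r + det M = 0"
  shows "\<exists>v. v \<noteq> 0 \<and> M *v v = r *\<^sub>R v"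
proof -
  have q: "r*r - (M$1$1 + M$2$2) * r + (M$1$1 * M$2$2 - M$1$2 * M$2$1) = 0"
    using assms by (simp add: det_2 power2_eq_square)
  show ?thesis
  proof (cases "M$1$2 = 0")
    case False
    let ?v = "mk2 (M$1$2) (r - M$1$1)"
    have "M *v ?v = r *\<^sub>R ?v" unfolding vec2_eq mv1 mv2 using q by (simp add: algebra_simps)
    moreover have "?v \<noteq> 0" using False by (simp add: mk2_eq0)
    ultimately show ?thesis by blast
  next
    case z: True
    show ?thesis
    proof (cases "M$2$1 = 0")
      case False
      let ?v = "mk2 (r - M$2$2) (M$2$1)"
      have "M *v ?v = r *\<^sub>R ?v" unfolding vec2_eq mv1 mv2 using q z by (simp add: algebra_simps)
      moreover have "?v \<noteq> 0" using False by (simp add: mk2_eq0)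
      ultimately show ?thesis by blast
    next
      case True
      have "(r - M$1$1) * (r - M$2$2) = 0" using q z True by (simp add: algebra_simps)
      then have "r = M$1$1 \<or> r = M$2$2" by simp
      then show ?thesis
      proof
        assume r: "r = M$1$1"
        have "M *v mk2 1 0 = r *\<^sub>R mk2 1 0" unfolding vec2_eq mv1 mv2 using z True r by simp
        then show ?thesis by (metis mk2_eq0 zero_neq_one)
      next
        assume r: "r = M$2$2"
        have "M *v mk2 0 1 = r *\<^sub>R mk2 0 1" unfolding vec2_eq mv1 mv2 using z True r by simp
        then show ?thesis by (metis mk2_eq0 zero_neq_one)
      qed
    qed
  qed
qed

lemma hyperbolic_crit:
  fixes M :: mat2
  assumes d: "\<bar>det M\<bar> = 1" and t: "(M$1$1 + M$2$2)^2 > (1 + det M)^2"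
  shows "hyperbolic M"
proof -
  define T where "T = M$1$1 + M$2$2"
  define D where "D = det M"
  have disc: "T^2 - 4*D > 0"
  proof -
    have "(1 + D)^2 - 4*D = (1 - D)^2" by (simp add: power2_eq_square algebra_simps)
    then show ?thesis using t unfolding T_def D_def by (smt (verit) zero_le_power2)
  qed
  define s where "s = sqrt (T^2 - 4*D)"
  have s2: "s^2 = T^2 - 4*D" unfolding s_def using disc by simp
  define r1 where "r1 = (T + s)/2"
  define r2 where "r2 = (T - s)/2"
  have q1: "r1^2 - T * r1 + D = 0" unfolding r1_def using s2 by (simp add: power2_eq_square field_simps)
  have q2: "r2^2 - T * r2 + D = 0" unfolding r2_def using s2 by (simp add: power2_eq_square field_simps)
  have prod: "r1 * r2 = D" unfolding r1_def r2_def using s2 by (simp add: power2_eq_square field_simps)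
  have sum: "r1 + r2 = T" unfolding r1_def r2_def by (simp add: field_simps)
  have aD: "\<bar>D\<bar> = 1" using d D_def by simp
  have ap: "\<bar>r1\<bar> * \<bar>r2\<bar> = 1" using prod aD by (simp add: abs_mult[symmetric])
  have ne: "\<bar>r1\<bar> \<noteq> 1"
  proof
    assume a: "\<bar>r1\<bar> = 1"
    then have r11: "r1 * r1 = 1" using abs_mult_self_eq[of r1] by simp
    have "(r1*r2)*r1 = r2*(r1*r1)" by (simp add: algebra_simps)
    then have "r2 = D * r1" using prod r11 by simp
    then have "T = r1 * (1 + D)" using sum by (simp add: algebra_simps)
    then have "T^2 = (1 + D)^2" using r11 by (simp add: power2_eq_square algebra_simps)
    then show False using t unfolding T_def D_def by simp
  qed
  obtain u where u: "u \<noteq> 0" "M *v u = r1 *\<^sub>R u" using eig_exists[of r1 M] q1 unfolding T_def D_def by blast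
  obtain v where v: "v \<noteq> 0" "M *v v = r2 *\<^sub>R v" using eig_exists[of r2 M] q2 unfolding T_def D_def by blast
  show ?thesis
  proof (cases "\<bar>r1\<bar> > 1")
    case True
    have "\<bar>r2\<bar> = 1 / \<bar>r1\<bar>" using ap True by (simp add: field_simps)
    then have "\<bar>r2\<bar> < 1" using True by simp
    then show ?thesis unfolding hyperbolic_def using u v True by blast
  next
    case False
    then have "\<bar>r1\<bar> < 1" using ne by simp
    have "\<bar>r1\<bar> \<noteq> 0" using ap by auto
    then have "\<bar>r2\<bar> = 1 / \<bar>r1\<bar>" using ap by (simp add: field_simps)
    then have "\<bar>r2\<bar> > 1" using \<open>\<bar>r1\<bar> < 1\<close> \<open>\<bar>r1\<bar> \<noteq> 0\<close> by simp
    then show ?thesis unfolding hyperbolic_def using u v \<open>\<bar>r1\<bar> < 1\<close> by blast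
  qed
qed


definition Ew :: "('k::finite \<Rightarrow> real) \<Rightarrow> nat \<Rightarrow> ('k list \<Rightarrow> real) \<Rightarrow> real" where
  "Ew p n f = (\<Sum>w\<in>{w::'k list. length w = n}. prod_list (map p w) * f w)"

lemma finite_W: "finite {w::'k::finite list. length w = n}"
  using finite_lists_length_eq[of "UNIV::'k set" n] by simp

lemma W_Suc: "{w::'k list. length w = Suc n} = (\<lambda>(x,w). x # w) ` (UNIV \<times> {w. length w = n})"
  by (auto simp: length_Suc_conv image_iff)

lemma sum_W_Suc:
  "(\<Sum>w\<in>{w::'k::finite list. length w = Suc n}. g w) = (\<Sum>x\<in>UNIV. \<Sum>w\<in>{w. length w = n}. g (x # w))"
proof -
  have inj: "inj_on (\<lambda>(x,w). x # w) (UNIV \<times> {w::'k list. length w = n})"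
    by (auto simp: inj_on_def)
  have "(\<Sum>w\<in>{w::'k list. length w = Suc n}. g w) = (\<Sum>(x,w)\<in>UNIV \<times> {w::'k list. length w = n}. g (x # w))"
    unfolding W_Suc by (subst sum.reindex[OF inj]) (simp add: case_prod_unfold)
  also have "\<dots> = (\<Sum>x\<in>UNIV. \<Sum>w\<in>{w. length w = n}. g (x # w))"
    by (rule sum.cartesian_product[symmetric])
  finally show ?thesis .
qed

lemma Ew_Suc: "Ew p (Suc n) f = (\<Sum>x\<in>UNIV. p x * Ew p n (\<lambda>w. f (x # w)))"
  unfolding Ew_def sum_W_Suc by (simp add: sum_distrib_left algebra_simps)

lemma Ew_add: "Ew p n (\<lambda>w. f w + g w) = Ew p n f + Ew p n g"
  unfolding Ew_def by (simp add: algebra_simps sum.distrib)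

lemma Ew_diff: "Ew p n (\<lambda>w. f w - g w) = Ew p n f - Ew p n g"
  unfolding Ew_def by (simp add: algebra_simps sum_subtractf)

lemma Ew_cmult: "Ew p n (\<lambda>w. c * f w) = c * Ew p n f"
  unfolding Ew_def by (simp add: sum_distrib_left algebra_simps)

lemma Ew_const: "Ew p n (\<lambda>w. c) = c * Ew p n (\<lambda>w. 1)"
  using Ew_cmult[of p n c "\<lambda>w. 1"] by simp


lemma mv_scaleR: "(M::mat2) *v (c *\<^sub>R u) = c *\<^sub>R (M *v u)"
  by (simp add: vec2_eq mv1 mv2 algebra_simps)

lemma mv_add: "(M::mat2) *v (u + v) = M *v u + M *v v"
  by (simp add: vec2_eq mv1 mv2 algebra_simps)

lemma mv_diff_mat: "((M::mat2) - N) *v u = M *v u - N *v u"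
  by (simp add: vec2_eq mv1 mv2 algebra_simps)

lemma inv_line_eig:
  assumes "inv_line A u"
  shows "A j *v u = line_eig A u j *\<^sub>R u"
proof -
  obtain a where a: "A j *v u = a *\<^sub>R u" using assms unfolding inv_line_def by blast
  have "u \<bullet> u \<noteq> 0" using assms unfolding inv_line_def by simp
  then have "line_eig A u j = a" unfolding line_eig_def a by simp
  then show ?thesis using a by simp
qed

lemma line_eig_scale:
  assumes "c \<noteq> 0"
  shows "line_eig A (c *\<^sub>R u) j = line_eig A u j"
  using assms unfolding line_eig_def mv_scaleR by (simp add: field_simps power2_eq_square)

lemma inv_line_scale:
  assumes "c \<noteq> 0" "inv_line A u"
  shows "inv_line A (c *\<^sub>R u)"
  unfolding inv_line_def
proof (intro conjI allI)
  show "c *\<^sub>R u \<noteq> 0" using assms unfolding inv_line_def by simp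
  fix j
  have "A j *v (c *\<^sub>R u) = line_eig A u j *\<^sub>R (c *\<^sub>R u)"
    unfolding mv_scaleR inv_line_eig[OF assms(2)] by (simp add: scaleR_left_commute)
  then show "\<exists>a. A j *v (c *\<^sub>R u) = a *\<^sub>R (c *\<^sub>R u)" by blast
qed

lemma line_exp_scale:
  assumes "c \<noteq> 0"
  shows "line_exp p A (c *\<^sub>R u) = line_exp p A u"
  unfolding line_exp_def line_eig_scale[OF assms] ..

lemma eig_prod:
  assumes "inv_line A u" "inv_line A v" "det2 u v \<noteq> 0"
  shows "line_eig A u j * line_eig A v j = det (A j)"
proof -
  have "det2 (A j *v u) (A j *v v) = det (A j) * det2 u v" by (rule det2_mult)
  then have "line_eig A u j * line_eig A v j * det2 u v = det (A j) * det2 u v"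
    unfolding inv_line_eig[OF assms(1)] inv_line_eig[OF assms(2)] by (simp add: ac_simps)
  then have "(line_eig A u j * line_eig A v j - det (A j)) * det2 u v = 0" by (simp add: algebra_simps)
  then show ?thesis using assms(3) by simp
qed

lemma word_prod_snoc: "word_prod A (w @ [x]) = A x ** word_prod A w"
  unfolding word_prod_def by simp

lemma word_prod_eig:
  assumes "\<And>j. A j *v u = a j *\<^sub>R u"
  shows "word_prod A w *v u = prod_list (map a w) *\<^sub>R u"
proof (induction w rule: rev_induct)
  case Nil
  then show ?case by (simp add: word_prod_def)
next
  case (snoc x w)
  have "word_prod A (w @ [x]) *v u = A x *v (word_prod A w *v u)"
    by (simp add: word_prod_snoc matrix_vector_mul_assoc)
  also have "\<dots> = (prod_list (map a w) * a x) *\<^sub>R u" unfolding snoc mv_scaleR assms by simp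
  finally show ?case by (simp add: mult.commute)
qed

lemma abs_prod_exp:
  fixes a l :: "'k \<Rightarrow> real"
  assumes "\<And>j. \<bar>a j\<bar> = exp (l j)"
  shows "\<bar>prod_list (map a w)\<bar> = exp (sum_list (map l w))"
proof (induction w)
  case Nil then show ?case by simp
next
  case (Cons x w) then show ?case by (simp add: abs_mult assms exp_add)
qed

lemma mnorm_lower:
  assumes "M *v u = c *\<^sub>R u" "u \<noteq> 0"
  shows "\<bar>c\<bar> \<le> mnorm M"
proof -
  have "\<bar>c\<bar> * norm u \<le> mnorm M * norm u" using mnorm_bound[of M u] assms(1) by simp
  then show ?thesis using assms(2) by simp
qed

lemma mnorm_upper:
  assumes "M *v u = P *\<^sub>R u" "M *v v = Q *\<^sub>R v" "det2 u v \<noteq> 0"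
  shows "mnorm M \<le> (2 * norm u * norm v / \<bar>det2 u v\<bar>) * max \<bar>P\<bar> \<bar>Q\<bar>"
  unfolding mnorm_def
proof (rule onorm_le)
  fix z
  let ?D = "det2 u v"
  let ?K = "2 * norm u * norm v / \<bar>?D\<bar>"
  let ?m = "max \<bar>P\<bar> \<bar>Q\<bar>"
  define al where "al = det2 z v / ?D"
  define be where "be = det2 u z / ?D"
  have z: "z = al *\<^sub>R u + be *\<^sub>R v" unfolding al_def be_def by (rule decomp2[OF assms(3)])
  have Mz: "M *v z = (al * P) *\<^sub>R u + (be * Q) *\<^sub>R v"
    by (subst z) (simp add: mv_add mv_scaleR assms)
  have Dp: "\<bar>?D\<bar> > 0" using assms(3) by simp
  have al_b: "\<bar>al\<bar> \<le> norm z * norm v / \<bar>?D\<bar>" unfolding al_def abs_divide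
    using det2_le[of z v] Dp by (simp add: divide_right_mono)
  have be_b: "\<bar>be\<bar> \<le> norm u * norm z / \<bar>?D\<bar>" unfolding be_def abs_divide
    using det2_le[of u z] Dp by (simp add: divide_right_mono)
  have "norm (M *v z) \<le> \<bar>al\<bar> * \<bar>P\<bar> * norm u + \<bar>be\<bar> * \<bar>Q\<bar> * norm v"
    unfolding Mz using norm_triangle_ineq[of "(al * P) *\<^sub>R u" "(be * Q) *\<^sub>R v"] by (simp add: abs_mult)
  also have "\<dots> \<le> (norm z * norm v / \<bar>?D\<bar>) * ?m * norm u + (norm u * norm z / \<bar>?D\<bar>) * ?m * norm v"
    using al_b be_b by (intro add_mono mult_right_mono mult_mono) auto
  also have "\<dots> = ?K * ?m * norm z" by (simp add: field_simps)
  finally show "norm (M *v z) \<le> ?K * ?m * norm z" .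
qed


lemma mnorm_bound_diff: "norm ((B - A) *v x) \<le> mnorm (B - A) * norm x" for A B :: mat2
  by (rule mnorm_bound)

lemma eig_close:
  fixes Ai Bi :: mat2
  assumes Ae: "Ai *v e = a *\<^sub>R e" and anz: "a \<noteq> 0" and ac: "a * c = det Ai"
    and Bv: "Bi *v v = lam *\<^sub>R v"
  shows "\<bar>lam - c\<bar> * \<bar>det2 e v\<bar> \<le> norm e * mnorm (Bi - Ai) * norm v"
proof -
  have "a * det2 e (Ai *v v) = det Ai * det2 e v"
    using det2_mult[of Ai e v] unfolding Ae by simp
  then have "a * det2 e (Ai *v v) = a * (c * det2 e v)" using ac by simp
  then have h: "det2 e (Ai *v v) = c * det2 e v" using anz by simp
  have "det2 e ((Bi - Ai) *v v) = (lam - c) * det2 e v"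
    unfolding mv_diff_mat det2_diff_right Bv h by (simp add: algebra_simps)
  then have "\<bar>lam - c\<bar> * \<bar>det2 e v\<bar> = \<bar>det2 e ((Bi - Ai) *v v)\<bar>" by (simp add: abs_mult)
  also have "\<dots> \<le> norm e * norm ((Bi - Ai) *v v)" by (rule det2_le)
  also have "\<dots> \<le> norm e * (mnorm (Bi - Ai) * norm v)"
    by (intro mult_left_mono mnorm_bound) simp
  finally show ?thesis by (simp add: mult.assoc)
qed

lemma quad_form:
  fixes M :: mat2
  assumes Me: "M *v e = a *\<^sub>R e" and Mf: "M *v f = c *\<^sub>R f" and D: "det2 e f \<noteq> 0"
  shows "det2 (M *v v) v = (a - c) * det2 v f * det2 e v / det2 e f"
proof -
  define al where "al = det2 v f / det2 e f"
  define be where "be = det2 e v / det2 e f"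
  have v: "v = al *\<^sub>R e + be *\<^sub>R f" unfolding al_def be_def by (rule decomp2[OF D])
  have Mv: "M *v v = (al * a) *\<^sub>R e + (be * c) *\<^sub>R f"
    by (subst v) (simp add: mv_add mv_scaleR Me Mf)
  have "det2 (M *v v) v = al * be * (a - c) * det2 e f"
    unfolding Mv by (subst v) (simp add: det2_add_left det2_add_right algebra_simps det2_swap[of f e])
  also have "\<dots> = (a - c) * det2 v f * det2 e v / det2 e f"
    unfolding al_def be_def using D by (simp add: field_simps power2_eq_square)
  finally show ?thesis .
qed

lemma pdist_bound:
  fixes M :: mat2
  assumes d: "\<bar>det M\<bar> = 1" and v: "v \<noteq> 0"
  shows "pdist (M *v v) v \<le> Sm M * \<bar>det2 (M *v v) v\<bar> / (norm v)^2"
proof -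
  have nv: "norm v > 0" using v by simp
  have lb: "norm v \<le> Sm M * norm (M *v v)" by (rule Sm_inv_bound[OF d])
  then have Mv0: "M *v v \<noteq> 0" using nv by auto
  have nMv: "norm (M *v v) > 0" using Mv0 by simp
  have "pdist (M *v v) v = \<bar>det2 (M *v v) v\<bar> / (norm (M *v v) * norm v)"
    by (rule pdist_eq[OF Mv0 v])
  also have "\<dots> \<le> \<bar>det2 (M *v v) v\<bar> / ((norm v / Sm M) * norm v)"
  proof (cases "det2 (M *v v) v = 0")
    case True then show ?thesis by simp
  next
    case False
    have Sp: "Sm M > 0" using lb nv Sm_ge0[of M] by (cases "Sm M = 0") auto
    have "norm v / Sm M \<le> norm (M *v v)" using lb Sp by (simp add: field_simps)
    then have le: "(norm v / Sm M) * norm v \<le> norm (M *v v) * norm v" using nv mult_right_mono[of "norm v / Sm M" "norm (M *v v)" "norm v"] by simp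
    have pos: "0 < norm (M *v v) * norm v * ((norm v / Sm M) * norm v)" using nv Sp nMv by simp
    show ?thesis using divide_left_mono[OF le _ pos] by simp
  qed
  also have "\<dots> = Sm M * \<bar>det2 (M *v v) v\<bar> / (norm v)^2"
  proof (cases "Sm M = 0")
    case True
    then show ?thesis using lb nv by simp
  next
    case False
    then show ?thesis using nv by (simp add: field_simps power2_eq_square)
  qed
  finally show ?thesis .
qed

lemma det2_pert:
  fixes A B :: mat2
  shows "\<bar>det2 (B *v v) v\<bar> \<le> \<bar>det2 (A *v v) v\<bar> + mnorm (B - A) * (norm v)^2"
proof -
  have "B *v v = A *v v + (B - A) *v v" by (simp add: mv_diff_mat)
  then have "det2 (B *v v) v = det2 (A *v v) v + det2 ((B - A) *v v) v" by (simp add: det2_add_left)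
  moreover have "\<bar>det2 ((B - A) *v v) v\<bar> \<le> mnorm (B - A) * (norm v)^2"
  proof -
    have "\<bar>det2 ((B - A) *v v) v\<bar> \<le> norm ((B - A) *v v) * norm v" by (rule det2_le)
    also have "\<dots> \<le> mnorm (B - A) * norm v * norm v" by (intro mult_right_mono mnorm_bound) simp
    finally show ?thesis by (simp add: power2_eq_square mult.assoc)
  qed
  ultimately show ?thesis by linarith
qed

lemma linear_det2_left: "linear (\<lambda>z. det2 z y *\<^sub>R w)"
  by (rule linearI) (simp_all add: det2_add_left scaleR_add_left)

lemma linear_det2_right: "linear (\<lambda>z. det2 x z *\<^sub>R w)"
  by (rule linearI) (simp_all add: det2_add_right scaleR_add_left)

lemma diag_approx:
  fixes M :: mat2
  assumes nx: "norm x = 1" and ny: "norm y = 1" and dl: "0 < dl" and Dxy: "dl \<le> \<bar>det2 x y\<bar>"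
    and dM: "\<bar>det M\<bar> = 1" and SM: "Sm M \<le> SB"
    and ex: "\<bar>det2 (M *v x) x\<bar> \<le> eta" and ey: "\<bar>det2 (M *v y) y\<bar> \<le> eta"
    and small: "eta / dl \<le> 1/2"
  shows "\<exists>N al de. \<bar>det N\<bar> = 1 \<and> N *v x = al *\<^sub>R x \<and> N *v y = de *\<^sub>R y \<and>
      mnorm (M - N) \<le> (eta / dl^2) * (2 + 2 * SB / (3 * dl))"
proof -
  define D where "D = det2 x y"
  have D0: "D \<noteq> 0" and aD: "dl \<le> \<bar>D\<bar>" using Dxy dl unfolding D_def by auto
  have aDp: "\<bar>D\<bar> > 0" using D0 by simp
  define al where "al = det2 (M *v x) y / D"
  define ga where "ga = det2 x (M *v x) / D"
  define be where "be = det2 (M *v y) y / D"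
  define de where "de = det2 x (M *v y) / D"
  have Mx: "M *v x = al *\<^sub>R x + ga *\<^sub>R y" unfolding al_def ga_def D_def by (rule decomp2[OF D0[unfolded D_def]])
  have My: "M *v y = be *\<^sub>R x + de *\<^sub>R y" unfolding be_def de_def D_def by (rule decomp2[OF D0[unfolded D_def]])
  have eta0: "eta \<ge> 0" using ex by linarith
  have ga_b: "\<bar>ga\<bar> \<le> eta / dl"
  proof -
    have "\<bar>ga\<bar> = \<bar>det2 (M *v x) x\<bar> / \<bar>D\<bar>" unfolding ga_def by (simp add: det2_swap[of x] abs_divide)
    also have "\<dots> \<le> eta / dl" using ex aD dl eta0 by (intro frac_le) auto
    finally show ?thesis .
  qed
  have be_b: "\<bar>be\<bar> \<le> eta / dl"
  proof -
    have "\<bar>be\<bar> = \<bar>det2 (M *v y) y\<bar> / \<bar>D\<bar>" unfolding be_def by (simp add: abs_divide)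
    also have "\<dots> \<le> eta / dl" using ey aD dl eta0 by (intro frac_le) auto
    finally show ?thesis .
  qed
  have ga_h: "\<bar>ga\<bar> \<le> 1/2" using ga_b small by linarith
  have bg: "\<bar>be * ga\<bar> \<le> 1/4"
  proof -
    have be_h: "\<bar>be\<bar> \<le> 1/2" using be_b small by linarith
    have "\<bar>be * ga\<bar> \<le> (1/2) * (1/2)" unfolding abs_mult using be_h ga_h
      by (intro mult_mono) auto
    then show ?thesis by simp
  qed
  have detM: "det M = al * de - be * ga"
  proof -
    have "det M * D = det2 (M *v x) (M *v y)" unfolding D_def by (simp add: det2_mult)
    also have "\<dots> = (al * de - be * ga) * D" unfolding Mx My D_def
      by (simp add: det2_add_left det2_add_right algebra_simps det2_swap[of y x])
    finally show ?thesis using D0 by simp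
  qed
  have de_b: "\<bar>de\<bar> \<le> SB / dl"
  proof -
    have "\<bar>det2 x (M *v y)\<bar> \<le> norm x * norm (M *v y)" by (rule det2_le)
    also have "\<dots> \<le> Sm M" using Sm_bound[of M y] nx ny by simp
    also have "\<dots> \<le> SB" by (rule SM)
    finally have "\<bar>det2 x (M *v y)\<bar> \<le> SB" .
    then have "\<bar>de\<bar> \<le> SB / \<bar>D\<bar>" unfolding de_def abs_divide using aDp by (simp add: divide_right_mono)
    also have "\<dots> \<le> SB / dl" using aD dl \<open>\<bar>det2 x (M *v y)\<bar> \<le> SB\<close>
      by (intro divide_left_mono) (auto intro: order_trans[OF abs_ge_zero])
    finally show ?thesis .
  qed
  have ad: "\<bar>al\<bar> * \<bar>de\<bar> \<ge> 3/4"
  proof -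
    have "1 = \<bar>al * de - be * ga\<bar>" using dM detM by simp
    also have "\<dots> \<le> \<bar>al * de\<bar> + \<bar>be * ga\<bar>" by (rule abs_triangle_ineq4)
    finally show ?thesis using bg by (simp add: abs_mult)
  qed
  have SBp: "SB > 0"
  proof -
    have "\<bar>de\<bar> > 0" using ad by (cases "de = 0") auto
    then show ?thesis using de_b dl by (smt (verit) divide_nonpos_pos)
  qed
  have al_b: "\<bar>al\<bar> \<ge> 3 * dl / (4 * SB)"
  proof -
    have "\<bar>de\<bar> > 0" using ad by (cases "de = 0") auto
    have "3/4 \<le> \<bar>al\<bar> * (SB / dl)" using ad de_b by (smt (verit) abs_ge_zero mult_left_mono)
    then show ?thesis using dl SBp by (simp add: field_simps)
  qed
  have alp: "\<bar>al\<bar> > 0" using al_b dl SBp by (smt (verit) divide_pos_pos)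
  define ka where "ka = be * ga / al"
  have ka_b: "\<bar>ka\<bar> \<le> (eta / dl) * (2 * SB / (3 * dl))"
  proof -
    have "\<bar>ka\<bar> = \<bar>be\<bar> * \<bar>ga\<bar> / \<bar>al\<bar>" unfolding ka_def by (simp add: abs_mult abs_divide)
    also have "\<dots> \<le> (eta / dl) * (1/2) / (3 * dl / (4 * SB))"
      using be_b ga_h al_b alp dl SBp by (intro frac_le mult_mono) auto
    also have "\<dots> = (eta / dl) * (2 * SB / (3 * dl))" using dl SBp by (simp add: field_simps)
    finally show ?thesis .
  qed
  define E where "E z = (det2 z y / D) *\<^sub>R (ga *\<^sub>R y) + (det2 x z / D) *\<^sub>R (be *\<^sub>R x + ka *\<^sub>R y)" for z
  have linE: "linear E"
  proof -
    have "E = (\<lambda>z. det2 z y *\<^sub>R ((1/D) *\<^sub>R (ga *\<^sub>R y)) + det2 x z *\<^sub>R ((1/D) *\<^sub>R (be *\<^sub>R x + ka *\<^sub>R y)))"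
      unfolding E_def by (rule ext) simp
    moreover have "linear (\<lambda>z. det2 z y *\<^sub>R ((1/D) *\<^sub>R (ga *\<^sub>R y)) + det2 x z *\<^sub>R ((1/D) *\<^sub>R (be *\<^sub>R x + ka *\<^sub>R y)))"
      by (rule linear_compose_add[OF linear_det2_left linear_det2_right])
    ultimately show ?thesis by simp
  qed
  define N where "N = M - matrix E"
  have NE: "N *v z = M *v z - E z" for z unfolding N_def mv_diff_mat matrix_works[OF linE[unfolded linear_matrix_vector_mul_eq[symmetric]]] ..
  have Nx: "N *v x = al *\<^sub>R x" unfolding NE Mx E_def using D0 unfolding D_def by simp
  have Ny: "N *v y = (de - ka) *\<^sub>R y" unfolding NE My E_def using D0 unfolding D_def
    by (simp add: algebra_simps det2_swap[of y x])
  have detN: "det N = det M"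
  proof -
    have "det N * D = det2 (N *v x) (N *v y)" unfolding D_def by (simp add: det2_mult)
    also have "\<dots> = al * (de - ka) * D" unfolding Nx Ny D_def by simp
    finally have "det N = al * (de - ka)" using D0 by simp
    also have "\<dots> = al * de - be * ga" unfolding ka_def using alp by (simp add: field_simps)
    finally show ?thesis using detM by simp
  qed
  have mE: "mnorm (M - N) \<le> (eta / dl^2) * (2 + 2 * SB / (3 * dl))"
  proof -
    have "M - N = matrix E" unfolding N_def by simp
    then have "mnorm (M - N) = onorm E" unfolding mnorm_def using matrix_vector_mul(2)[OF linE] by simp
    also have "\<dots> \<le> (\<bar>ga\<bar> + \<bar>be\<bar> + \<bar>ka\<bar>) / dl"
    proof (rule onorm_le)
      fix z
      have t1: "\<bar>det2 z y / D\<bar> \<le> norm z / dl"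
        unfolding abs_divide using det2_le[of z y] ny aD dl by (intro frac_le) auto
      have t2: "\<bar>det2 x z / D\<bar> \<le> norm z / dl"
        unfolding abs_divide using det2_le[of x z] nx aD dl by (intro frac_le) auto
      have "norm (E z) \<le> \<bar>det2 z y / D\<bar> * \<bar>ga\<bar> + \<bar>det2 x z / D\<bar> * (\<bar>be\<bar> + \<bar>ka\<bar>)"
      proof -
        have "norm (be *\<^sub>R x + ka *\<^sub>R y) \<le> \<bar>be\<bar> + \<bar>ka\<bar>"
          using norm_triangle_ineq[of "be *\<^sub>R x" "ka *\<^sub>R y"] nx ny by simp
        then have "norm ((det2 x z / D) *\<^sub>R (be *\<^sub>R x + ka *\<^sub>R y)) \<le> \<bar>det2 x z / D\<bar> * (\<bar>be\<bar> + \<bar>ka\<bar>)"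
          unfolding norm_scaleR by (rule mult_left_mono) auto
        moreover have "norm ((det2 z y / D) *\<^sub>R (ga *\<^sub>R y)) = \<bar>det2 z y / D\<bar> * \<bar>ga\<bar>" using ny by (simp add: abs_mult)
        ultimately show ?thesis unfolding E_def
          using norm_triangle_ineq[of "(det2 z y / D) *\<^sub>R (ga *\<^sub>R y)" "(det2 x z / D) *\<^sub>R (be *\<^sub>R x + ka *\<^sub>R y)"]
          by linarith
      qed
      also have "\<dots> \<le> (norm z / dl) * \<bar>ga\<bar> + (norm z / dl) * (\<bar>be\<bar> + \<bar>ka\<bar>)"
        using t1 t2 by (intro add_mono mult_right_mono) auto
      also have "\<dots> = (\<bar>ga\<bar> + \<bar>be\<bar> + \<bar>ka\<bar>) / dl * norm z" by (simp add: add_divide_distrib algebra_simps)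
      finally show "norm (E z) \<le> (\<bar>ga\<bar> + \<bar>be\<bar> + \<bar>ka\<bar>) / dl * norm z" .
    qed
    also have "\<dots> \<le> (eta / dl + eta / dl + (eta / dl) * (2 * SB / (3 * dl))) / dl"
      using ga_b be_b ka_b dl by (intro divide_right_mono add_mono) auto
    also have "\<dots> = (eta / dl^2) * (2 + 2 * SB / (3 * dl))" using dl by (simp add: field_simps power2_eq_square)
    finally show ?thesis .
  qed
  show ?thesis using detN dM Nx Ny mE by (intro exI[of _ N] exI[of _ al] exI[of _ "de - ka"]) simp
qed


lemma eig_unique:
  fixes M :: mat2
  assumes 1: "M *v v1 = l1 *\<^sub>R v1" and 2: "M *v v2 = l2 *\<^sub>R v2" and 3: "M *v v3 = l3 *\<^sub>R v3"
    and "v3 \<noteq> 0" and "l1 \<noteq> l3" and "l2 \<noteq> l3"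
  shows "det2 v1 v2 = 0"
proof (rule ccontr)
  assume D: "det2 v1 v2 \<noteq> 0"
  define al where "al = det2 v3 v2 / det2 v1 v2"
  define be where "be = det2 v1 v3 / det2 v1 v2"
  have v3: "v3 = al *\<^sub>R v1 + be *\<^sub>R v2" unfolding al_def be_def by (rule decomp2[OF D])
  have Mv3: "M *v v3 = (al * l1) *\<^sub>R v1 + (be * l2) *\<^sub>R v2"
    by (subst v3) (simp add: mv_add mv_scaleR 1 2)
  have "det2 (M *v v3) v2 = al * l1 * det2 v1 v2" unfolding Mv3 by (simp add: det2_add_left)
  moreover have "det2 (M *v v3) v2 = l3 * (al * det2 v1 v2)" unfolding 3 by (subst v3) (simp add: det2_add_left)
  ultimately have "al * (l1 - l3) * det2 v1 v2 = 0" by (auto simp: algebra_simps)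
  then have a0: "al = 0" using D assms(5) by simp
  have "det2 v1 (M *v v3) = be * l2 * det2 v1 v2" unfolding Mv3 by (simp add: det2_add_right)
  moreover have "det2 v1 (M *v v3) = l3 * (be * det2 v1 v2)" unfolding 3 by (subst v3) (simp add: det2_add_right)
  ultimately have "be * (l2 - l3) * det2 v1 v2 = 0" by (auto simp: algebra_simps)
  then have b0: "be = 0" using D assms(6) by simp
  show False using v3 a0 b0 assms(4) by simp
qed

lemma pdist_scale:
  assumes "u \<noteq> 0" "v \<noteq> 0" "c \<noteq> 0" "d \<noteq> 0"
  shows "pdist (c *\<^sub>R u) (d *\<^sub>R v) = pdist u v"
  using assms by (simp add: pdist_eq abs_mult field_simps)

lemma pdist_inv:
  fixes M :: mat2
  assumes d: "\<bar>det M\<bar> = 1" and v: "v \<noteq> 0"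
  shows "pdist (M *v v) v \<le> (Sm M)^2 * pdist (matrix_inv M *v v) v"
proof -
  have d0: "det M \<noteq> 0" using d by auto
  let ?w = "matrix_inv M *v v"
  have Mw: "M *v ?w = v" by (rule matrix_inv_apply(1)[OF d0])
  have w0: "?w \<noteq> 0" using Mw v by auto
  have nv: "norm v > 0" using v by simp
  have nw: "norm ?w \<le> Sm M * norm v" using Sm_inv_bound[OF d, of ?w] Mw by simp
  have eq: "\<bar>det2 ?w v\<bar> = \<bar>det2 (M *v v) v\<bar>"
  proof -
    have "det2 (M *v ?w) (M *v v) = det M * det2 ?w v" by (rule det2_mult)
    then have "det2 v (M *v v) = det M * det2 ?w v" using Mw by simp
    then have "\<bar>det2 v (M *v v)\<bar> = \<bar>det2 ?w v\<bar>" using d by (simp add: abs_mult)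
    then show ?thesis by (simp add: det2_swap[of v])
  qed
  have p1: "pdist (M *v v) v \<le> Sm M * \<bar>det2 (M *v v) v\<bar> / (norm v)^2" by (rule pdist_bound[OF d v])
  have p2: "pdist ?w v = \<bar>det2 (M *v v) v\<bar> / (norm ?w * norm v)" using pdist_eq[OF w0 v] eq by simp
  show ?thesis
  proof (cases "Sm M = 0")
    case True
    then show ?thesis using nw nv w0 by simp
  next
    case False
    then have Sp: "Sm M > 0" using Sm_ge0[of M] by simp
    have nwp: "norm ?w > 0" using w0 by simp
    have "\<bar>det2 (M *v v) v\<bar> / (Sm M * norm v * norm v) \<le> \<bar>det2 (M *v v) v\<bar> / (norm ?w * norm v)"
      using nw nwp nv Sp by (intro divide_left_mono mult_right_mono mult_pos_pos) auto
    then have "\<bar>det2 (M *v v) v\<bar> / (Sm M * norm v * norm v) \<le> pdist ?w v" using p2 by simp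
    then have "(Sm M)^2 * (\<bar>det2 (M *v v) v\<bar> / (Sm M * norm v * norm v)) \<le> (Sm M)^2 * pdist ?w v"
      by (rule mult_left_mono) simp
    moreover have "(Sm M)^2 * (\<bar>det2 (M *v v) v\<bar> / (Sm M * norm v * norm v)) = Sm M * \<bar>det2 (M *v v) v\<bar> / (norm v)^2"
      using Sp nv by (simp add: field_simps power2_eq_square)
    ultimately show ?thesis using p1 by simp
  qed
qed

lemma edir_plus_prop:
  assumes "hyperbolic M"
  shows "edir_plus M \<noteq> 0 \<and> (\<exists>l. \<bar>l\<bar> > 1 \<and> M *v edir_plus M = l *\<^sub>R edir_plus M)"
proof -
  have "\<exists>v. v \<noteq> 0 \<and> (\<exists>l. \<bar>l\<bar> > 1 \<and> M *v v = l *\<^sub>R v)" using assms unfolding hyperbolic_def by blast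
  then show ?thesis unfolding edir_plus_def by (rule someI_ex)
qed

lemma edir_minus_prop:
  assumes "hyperbolic M"
  shows "edir_minus M \<noteq> 0 \<and> (\<exists>l. \<bar>l\<bar> < 1 \<and> M *v edir_minus M = l *\<^sub>R edir_minus M)"
proof -
  have "\<exists>v. v \<noteq> 0 \<and> (\<exists>l. \<bar>l\<bar> < 1 \<and> M *v v = l *\<^sub>R v)" using assms unfolding hyperbolic_def by blast
  then show ?thesis unfolding edir_minus_def by (rule someI_ex)
qed

lemma Max_pairs_ge:
  fixes F :: "'k::finite \<Rightarrow> 'k \<Rightarrow> real"
  assumes "i \<in> S"
  shows "F i j \<le> Max {F i j | i j. i \<in> S}"
proof -
  have eq: "{F i j | i j. i \<in> S} = (\<lambda>(i,j). F i j) ` (S \<times> UNIV)" by auto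
  show ?thesis unfolding eq using assms by (intro Max_ge) auto
qed

lemma Max_pairs_le:
  fixes F :: "'k::finite \<Rightarrow> 'k \<Rightarrow> real"
  assumes "S \<noteq> {}" "\<And>i j. i \<in> S \<Longrightarrow> F i j \<le> c"
  shows "Max {F i j | i j. i \<in> S} \<le> c"
proof -
  have eq: "{F i j | i j. i \<in> S} = (\<lambda>(i,j). F i j) ` (S \<times> UNIV)" by auto
  show ?thesis unfolding eq using assms by (subst Max_le_iff) auto
qed

lemma dcoc_ge: "mnorm (B j - A j) \<le> dcoc B A"
  unfolding dcoc_def by (intro Max_ge) auto

lemma dcoc_le: "(\<And>j. mnorm (B j - A j) \<le> c) \<Longrightarrow> dcoc B A \<le> c"
  unfolding dcoc_def by (subst Max_le_iff) auto

lemma dcoc_nonneg: "dcoc B A \<ge> 0"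
  using dcoc_ge[of B undefined A] mnorm_ge0 order_trans by blast

lemma dDiag_le: "D \<in> Diag \<Longrightarrow> dDiag B \<le> dcoc B D"
  unfolding dDiag_def
  by (rule cInf_lower) (auto intro: bdd_belowI[where m=0] simp: dcoc_nonneg)


lemma np_det2:
  assumes "u \<noteq> 0"
  shows "(\<not> (\<exists>c. v = c *\<^sub>R u)) \<longleftrightarrow> det2 u v \<noteq> 0"
  using det2_zero_parallel[OF assms] by auto

lemma det2_lower:
  assumes ne: "norm e = 1" and nf: "norm f = 1" and nx: "norm x = 1" and D: "det2 e f \<noteq> 0"
  shows "\<bar>det2 f x\<bar> \<ge> \<bar>det2 e f\<bar> - \<bar>det2 e x\<bar>"
proof -
  define al where "al = det2 x f / det2 e f"
  define be where "be = det2 e x / det2 e f"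
  have x: "x = al *\<^sub>R e + be *\<^sub>R f" unfolding al_def be_def by (rule decomp2[OF D])
  have "1 \<le> \<bar>al\<bar> + \<bar>be\<bar>"
  proof -
    have "norm x \<le> norm (al *\<^sub>R e) + norm (be *\<^sub>R f)" by (subst x) (rule norm_triangle_ineq)
    then show ?thesis using ne nf nx by simp
  qed
  moreover have "det2 f x = - al * det2 e f" by (subst x) (simp add: det2_add_right det2_swap[of f e])
  moreover have "\<bar>be\<bar> * \<bar>det2 e f\<bar> = \<bar>det2 e x\<bar>" unfolding be_def using D by (simp add: abs_divide)
  ultimately have h1: "1 - \<bar>be\<bar> \<le> \<bar>al\<bar>" and h2: "\<bar>det2 f x\<bar> = \<bar>al\<bar> * \<bar>det2 e f\<bar>"
    and h3: "\<bar>be\<bar> * \<bar>det2 e f\<bar> = \<bar>det2 e x\<bar>" by (auto simp: abs_mult)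
  have "(1 - \<bar>be\<bar>) * \<bar>det2 e f\<bar> \<le> \<bar>al\<bar> * \<bar>det2 e f\<bar>" using h1 by (rule mult_right_mono) simp
  then show ?thesis using h2 h3 by (simp add: algebra_simps)
qed

lemma det2_plucker: "det2 e x * det2 f y - det2 e y * det2 f x = det2 e f * det2 x y"
  by (simp add: det2_def algebra_simps)

lemma Ew_cong: "(\<And>w. length w = n \<Longrightarrow> f w = g w) \<Longrightarrow> Ew p n f = Ew p n g"
  unfolding Ew_def by (intro sum.cong) auto

context
  fixes p :: "'k::finite \<Rightarrow> real"
  assumes ppos: "\<forall>j. p j > 0" and psum: "(\<Sum>j\<in>UNIV. p j) = 1"
begin

lemma pw_nonneg: "prod_list (map p w) \<ge> 0"
  using ppos by (induction w) (auto simp: less_imp_le)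

lemma Ew_mono: "(\<And>w. length w = n \<Longrightarrow> f w \<le> g w) \<Longrightarrow> Ew p n f \<le> Ew p n g"
  unfolding Ew_def by (intro sum_mono mult_left_mono) (auto simp: pw_nonneg)

lemma Ew_one: "Ew p n (\<lambda>w. 1) = 1"
proof (induction n)
  case 0
  have "{w::'k list. length w = 0} = {[]}" by auto
  then show ?case by (simp add: Ew_def)
next
  case (Suc n)
  then show ?case by (simp add: Ew_Suc psum)
qed

lemma Ew_const1: "Ew p n (\<lambda>w. c) = c"
  using Ew_const[of p n c] Ew_one by simp

lemma Ew_abs: "\<bar>Ew p n f\<bar> \<le> Ew p n (\<lambda>w. \<bar>f w\<bar>)"
proof -
  have "\<bar>Ew p n f\<bar> \<le> (\<Sum>w\<in>{w::'k list. length w = n}. \<bar>prod_list (map p w) * f w\<bar>)"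
    unfolding Ew_def by (rule sum_abs)
  also have "\<dots> = Ew p n (\<lambda>w. \<bar>f w\<bar>)" unfolding Ew_def by (simp add: abs_mult pw_nonneg)
  finally show ?thesis .
qed

lemma Ew_cs: "(Ew p n (\<lambda>w. \<bar>f w\<bar>))^2 \<le> Ew p n (\<lambda>w. (f w)^2)"
proof -
  define m where "m = Ew p n (\<lambda>w. \<bar>f w\<bar>)"
  have "0 \<le> Ew p n (\<lambda>w. (\<bar>f w\<bar> - m)^2)"
    using Ew_mono[of n "\<lambda>w. 0" "\<lambda>w. (\<bar>f w\<bar> - m)^2"] by (simp add: Ew_const1)
  also have "Ew p n (\<lambda>w. (\<bar>f w\<bar> - m)^2) = Ew p n (\<lambda>w. (f w)^2 - (2*m) * \<bar>f w\<bar> + m^2)"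
    by (simp add: power2_eq_square algebra_simps)
  also have "\<dots> = Ew p n (\<lambda>w. (f w)^2) - 2*m*m + m^2"
    unfolding Ew_add Ew_diff Ew_cmult Ew_const1 m_def by simp
  finally show ?thesis unfolding m_def by (simp add: power2_eq_square)
qed

definition "mu l = (\<Sum>j\<in>UNIV. p j * l j)"
definition "Xs l w = sum_list (map (\<lambda>x. l x - mu l) w)"

lemma Ew_X: "Ew p n (Xs l) = 0"
proof (induction n)
  case 0
  have "{w::'k list. length w = 0} = {[]}" by auto
  then show ?case by (simp add: Ew_def Xs_def)
next
  case (Suc n)
  have "Ew p (Suc n) (Xs l) = (\<Sum>x\<in>UNIV. p x * (l x - mu l))"
    unfolding Ew_Suc by (simp add: Xs_def Ew_add[unfolded Xs_def] Suc[unfolded Xs_def] Ew_const1)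
  also have "\<dots> = 0" by (simp add: mu_def algebra_simps sum_subtractf sum_distrib_right[symmetric] psum)
  finally show ?case .
qed

lemma Ew_X2: "Ew p n (\<lambda>w. (Xs l w)^2) = real n * (\<Sum>j\<in>UNIV. p j * (l j - mu l)^2)"
proof (induction n)
  case 0
  have "{w::'k list. length w = 0} = {[]}" by auto
  then show ?case by (simp add: Ew_def Xs_def)
next
  case (Suc n)
  have e: "\<And>x w. (Xs l (x # w))^2 = (l x - mu l)^2 + 2 * (l x - mu l) * Xs l w + (Xs l w)^2"
    by (simp add: Xs_def power2_eq_square algebra_simps)
  have "Ew p (Suc n) (\<lambda>w. (Xs l w)^2) = (\<Sum>x\<in>UNIV. p x * ((l x - mu l)^2 + real n * (\<Sum>j\<in>UNIV. p j * (l j - mu l)^2)))"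
    unfolding Ew_Suc e Ew_add Ew_cmult Ew_const1 Ew_X Suc by (simp add: mult.assoc)
  also have "\<dots> = real (Suc n) * (\<Sum>j\<in>UNIV. p j * (l j - mu l)^2)"
  proof -
    define c where "c = (\<Sum>j\<in>UNIV. p j * (l j - mu l)^2)"
    have "(\<Sum>x\<in>UNIV. p x * ((l x - mu l)^2 + real n * c)) = c + (\<Sum>x\<in>UNIV. p x * (real n * c))"
      unfolding c_def by (simp add: distrib_left sum.distrib)
    also have "(\<Sum>x\<in>UNIV. p x * (real n * c)) = (\<Sum>x\<in>UNIV. p x) * (real n * c)"
      by (simp add: sum_distrib_right)
    finally show ?thesis unfolding c_def[symmetric] using psum by (simp add: algebra_simps)
  qed
  finally show ?case .
qed

lemma Xs_eq: "Xs l w = sum_list (map l w) - real (length w) * mu l"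
  unfolding Xs_def by (induction w) (simp_all add: algebra_simps)

lemma lyap_eq:
  fixes A :: "'k \<Rightarrow> mat2"
  assumes u: "inv_line A u" and v: "inv_line A v" and D: "det2 u v \<noteq> 0"
    and dt: "\<forall>j. \<bar>det (A j)\<bar> = 1"
  shows "lyap p A = \<bar>line_exp p A u\<bar>" "line_exp p A v = - line_exp p A u"
proof -
  define a where "a j = line_eig A u j" for j
  define c where "c j = line_eig A v j" for j
  have ac: "\<bar>a j\<bar> * \<bar>c j\<bar> = 1" for j
    using eig_prod[OF u v D, of j] dt unfolding a_def c_def by (metis abs_mult)
  have anz: "\<bar>a j\<bar> > 0" for j using ac[of j] by (cases "a j = 0") auto
  define l where "l j = ln \<bar>a j\<bar>" for j
  have ea: "\<bar>a j\<bar> = exp (l j)" for j unfolding l_def using anz[of j] by simp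
  have ec: "\<bar>c j\<bar> = exp (- l j)" for j
  proof -
    have "\<bar>c j\<bar> = 1 / \<bar>a j\<bar>" using ac[of j] anz[of j] by (simp add: field_simps)
    then show ?thesis using ea[of j] by (simp add: exp_minus field_simps)
  qed
  have lu: "line_exp p A u = mu l" unfolding line_exp_def mu_def l_def a_def ..
  have lv: "line_exp p A v = - mu l"
  proof -
    have "line_exp p A v = (\<Sum>j\<in>UNIV. p j * (- l j))"
      unfolding line_exp_def c_def[symmetric] using ec by simp
    then show ?thesis unfolding mu_def by (simp add: sum_negf)
  qed
  show "line_exp p A v = - line_exp p A u" using lu lv by simp
  have u0: "u \<noteq> 0" and v0: "v \<noteq> 0" using u v unfolding inv_line_def by auto
  define K where "K = 2 * norm u * norm v / \<bar>det2 u v\<bar>"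
  have Kpos: "K > 0" unfolding K_def using u0 v0 D by simp
  define g where "g w = ln (mnorm (word_prod A w))" for w
  define S where "S w = sum_list (map l w)" for w
  have gb: "\<bar>S w\<bar> \<le> g w \<and> g w \<le> ln K + \<bar>S w\<bar>" for w
  proof -
    let ?M = "word_prod A w"
    define P where "P = prod_list (map a w)"
    define Q where "Q = prod_list (map c w)"
    have Mu: "?M *v u = P *\<^sub>R u" unfolding P_def
      by (rule word_prod_eig) (simp add: a_def inv_line_eig[OF u])
    have Mv: "?M *v v = Q *\<^sub>R v" unfolding Q_def
      by (rule word_prod_eig) (simp add: c_def inv_line_eig[OF v])
    have aP: "\<bar>P\<bar> = exp (S w)" unfolding P_def S_def by (rule abs_prod_exp) (rule ea)
    have aQ: "\<bar>Q\<bar> = exp (- S w)"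
    proof -
      have "\<bar>Q\<bar> = exp (sum_list (map (\<lambda>j. - l j) w))" unfolding Q_def by (rule abs_prod_exp) (rule ec)
      also have "sum_list (map (\<lambda>j. - l j) w) = - S w" unfolding S_def by (induction w) auto
      finally show ?thesis .
    qed
    have mx: "max \<bar>P\<bar> \<bar>Q\<bar> = exp \<bar>S w\<bar>" unfolding aP aQ by (cases "S w \<ge> 0") auto
    have lo: "exp \<bar>S w\<bar> \<le> mnorm ?M"
      using mnorm_lower[OF Mu u0] mnorm_lower[OF Mv v0] mx by (metis max_def)
    have up: "mnorm ?M \<le> K * exp \<bar>S w\<bar>"
      using mnorm_upper[OF Mu Mv D] mx unfolding K_def by simp
    have mpos: "mnorm ?M > 0" using lo by (smt (verit) exp_gt_zero)
    have "\<bar>S w\<bar> \<le> g w" unfolding g_def using lo mpos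
      by (metis exp_gt_zero ln_exp ln_le_cancel_iff)
    moreover have "g w \<le> ln K + \<bar>S w\<bar>"
    proof -
      have "g w \<le> ln (K * exp \<bar>S w\<bar>)" unfolding g_def using up mpos Kpos by simp
      also have "\<dots> = ln K + \<bar>S w\<bar>" using Kpos by (simp add: ln_mult)
      finally show ?thesis .
    qed
    ultimately show ?thesis by simp
  qed
  define m where "m = mu l"
  define s2 where "s2 = (\<Sum>j\<in>UNIV. p j * (l j - mu l)^2)"
  have s2nn: "s2 \<ge> 0" unfolding s2_def using ppos by (intro sum_nonneg) (simp add: less_imp_le)
  have Sx: "S w = Xs l w + real n * m" if "length w = n" for w n
    unfolding Xs_eq S_def m_def using that by simp
  have ES: "Ew p n S = real n * m" for n
  proof -
    have "Ew p n S = Ew p n (\<lambda>w. Xs l w + real n * m)" by (rule Ew_cong) (simp add: Sx)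
    also have "\<dots> = real n * m" unfolding Ew_add Ew_X Ew_const1 by simp
    finally show ?thesis .
  qed
  have low: "real n * \<bar>m\<bar> \<le> Ew p n g" for n
  proof -
    have "real n * \<bar>m\<bar> = \<bar>Ew p n S\<bar>" unfolding ES by (simp add: abs_mult)
    also have "\<dots> \<le> Ew p n (\<lambda>w. \<bar>S w\<bar>)" by (rule Ew_abs)
    also have "\<dots> \<le> Ew p n g" by (rule Ew_mono) (use gb in blast)
    finally show ?thesis .
  qed
  have EX: "Ew p n (\<lambda>w. \<bar>Xs l w\<bar>) \<le> sqrt (real n * s2)" for n
  proof -
    have "(Ew p n (\<lambda>w. \<bar>Xs l w\<bar>))^2 \<le> real n * s2" using Ew_cs[of n "Xs l"] Ew_X2[of n l] unfolding s2_def by simp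
    then show ?thesis by (rule real_le_rsqrt)
  qed
  have upp: "Ew p n g \<le> ln K + sqrt (real n * s2) + real n * \<bar>m\<bar>" for n
  proof -
    have "Ew p n g \<le> Ew p n (\<lambda>w. ln K + (\<bar>Xs l w\<bar> + real n * \<bar>m\<bar>))"
    proof (rule Ew_mono)
      fix w :: "'k list" assume "length w = n"
      then have "\<bar>S w\<bar> \<le> \<bar>Xs l w\<bar> + real n * \<bar>m\<bar>" using Sx[of w n] abs_triangle_ineq[of "Xs l w" "real n * m"] by (simp add: abs_mult)
      then show "g w \<le> ln K + (\<bar>Xs l w\<bar> + real n * \<bar>m\<bar>)" using gb[of w] by linarith
    qed
    also have "\<dots> = ln K + Ew p n (\<lambda>w. \<bar>Xs l w\<bar>) + real n * \<bar>m\<bar>"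
      unfolding Ew_add Ew_const1 by simp
    also have "\<dots> \<le> ln K + sqrt (real n * s2) + real n * \<bar>m\<bar>" using EX[of n] by simp
    finally show ?thesis .
  qed
  define f where "f n = Ew p n g / real n" for n
  have lyf: "lyap p A = lim f" unfolding lyap_def f_def Ew_def g_def ..
  have "f \<longlonglongrightarrow> \<bar>m\<bar>"
  proof (rule tendsto_sandwich[of "\<lambda>n. \<bar>m\<bar>" f sequentially "\<lambda>n. \<bar>m\<bar> + sqrt s2 / sqrt (real n) + ln K / real n"])
    show "\<forall>\<^sub>F n in sequentially. \<bar>m\<bar> \<le> f n"
      using eventually_ge_at_top[of "1::nat"]
    proof (rule eventually_mono)
      fix n :: nat assume "1 \<le> n"
      then show "\<bar>m\<bar> \<le> f n" unfolding f_def using low[of n] by (simp add: field_simps)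
    qed
    show "\<forall>\<^sub>F n in sequentially. f n \<le> \<bar>m\<bar> + sqrt s2 / sqrt (real n) + ln K / real n"
      using eventually_ge_at_top[of "1::nat"]
    proof (rule eventually_mono)
      fix n :: nat assume n1: "1 \<le> n"
      have np: "real n > 0" using n1 by simp
      have "sqrt (real n * s2) / real n = sqrt s2 / sqrt (real n)"
        using np by (simp add: real_sqrt_mult field_simps)
      moreover have "f n \<le> (ln K + sqrt (real n * s2) + real n * \<bar>m\<bar>) / real n"
        unfolding f_def using upp[of n] np by (simp add: divide_right_mono)
      moreover have "(ln K + sqrt (real n * s2) + real n * \<bar>m\<bar>) / real n
          = \<bar>m\<bar> + sqrt (real n * s2) / real n + ln K / real n"
        using np by (simp add: field_simps)
      ultimately show "f n \<le> \<bar>m\<bar> + sqrt s2 / sqrt (real n) + ln K / real n" by simp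
    qed
    show "(\<lambda>n. \<bar>m\<bar>) \<longlonglongrightarrow> \<bar>m\<bar>" by simp
    have sq: "filterlim (\<lambda>n. sqrt (real n)) at_infinity sequentially"
      by (rule filterlim_at_top_imp_at_infinity, rule filterlim_compose[OF sqrt_at_top filterlim_real_sequentially])
    have rn: "filterlim (\<lambda>n. real n) at_infinity sequentially"
      by (rule filterlim_at_top_imp_at_infinity, rule filterlim_real_sequentially)
    have "(\<lambda>n. \<bar>m\<bar> + sqrt s2 / sqrt (real n) + ln K / real n) \<longlonglongrightarrow> \<bar>m\<bar> + 0 + 0"
      by (intro tendsto_add tendsto_const tendsto_divide_0[OF tendsto_const] sq rn)
    then show "(\<lambda>n. \<bar>m\<bar> + sqrt s2 / sqrt (real n) + ln K / real n) \<longlonglongrightarrow> \<bar>m\<bar>" by simp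
  qed
  then have "lim f = \<bar>m\<bar>" by (rule limI)
  then show "lyap p A = \<bar>line_exp p A u\<bar>" using lyf lu m_def by simp
qed

lemma setup_e:
  fixes A :: "'k \<Rightarrow> mat2"
  assumes AD: "A \<in> Diag" and Lp: "lyap p A > 0"
  obtains f where "norm (e_plus p A) = 1" "norm f = 1" "det2 (e_plus p A) f \<noteq> 0"
    "inv_line A (e_plus p A)" "inv_line A f" "line_exp p A (e_plus p A) = lyap p A"
proof -
  obtain u v where SL: "A \<in> SL2k" and u: "inv_line A u" and v: "inv_line A v" and np: "\<not> (\<exists>c. v = c *\<^sub>R u)"
    using AD unfolding Diag_def by blast
  have u0: "u \<noteq> 0" and v0: "v \<noteq> 0" using u v unfolding inv_line_def by auto
  have D: "det2 u v \<noteq> 0" using np np_det2[OF u0] by blast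
  have dt: "\<forall>j. \<bar>det (A j)\<bar> = 1" using SL unfolding SL2k_def by blast
  have ly: "lyap p A = \<bar>line_exp p A u\<bar>" and lv: "line_exp p A v = - line_exp p A u"
    using lyap_eq[OF u v D dt] by auto
  define P where "P e = (norm e = 1 \<and> inv_line A e \<and> line_exp p A e = lyap p A \<and>
      (\<exists>f. norm f = 1 \<and> inv_line A f \<and> \<not> (\<exists>c. f = c *\<^sub>R e) \<and> line_exp p A f = - lyap p A))" for e
  have gen: "P ((1 / norm x) *\<^sub>R x)"
    if x: "inv_line A x" and y: "inv_line A y" and xy: "det2 x y \<noteq> 0"
      and lx: "line_exp p A x = lyap p A" and lyy: "line_exp p A y = - lyap p A" for x y
  proof -
    have x0: "x \<noteq> 0" and y0: "y \<noteq> 0" using x y unfolding inv_line_def by auto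
    let ?x = "(1 / norm x) *\<^sub>R x" and ?y = "(1 / norm y) *\<^sub>R y"
    have c1: "1 / norm x \<noteq> 0" "1 / norm y \<noteq> 0" using x0 y0 by auto
    have "det2 ?x ?y \<noteq> 0" using xy x0 y0 by simp
    then have "\<not> (\<exists>c. ?y = c *\<^sub>R ?x)" using np_det2[of ?x ?y] x0 by simp
    moreover have "norm ?x = 1" "norm ?y = 1" using x0 y0 by simp_all
    moreover have "inv_line A ?x" "inv_line A ?y" using inv_line_scale[OF c1(1) x] inv_line_scale[OF c1(2) y] by auto
    moreover have "line_exp p A ?x = lyap p A" "line_exp p A ?y = - lyap p A"
      using line_exp_scale[OF c1(1), of p A x] line_exp_scale[OF c1(2), of p A y] lx lyy by auto
    ultimately show ?thesis unfolding P_def by blast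
  qed
  have "\<exists>e. P e"
  proof (cases "line_exp p A u > 0")
    case True
    have "line_exp p A u = lyap p A" using True ly by simp
    moreover have "line_exp p A v = - lyap p A" using True ly lv by simp
    ultimately show ?thesis using gen[OF u v D] by blast
  next
    case False
    then have "line_exp p A u < 0" using ly Lp by auto
    moreover have "det2 v u \<noteq> 0" using D by (simp add: det2_swap[of v])
    moreover have "line_exp p A v = lyap p A" using \<open>line_exp p A u < 0\<close> ly lv by simp
    moreover have "line_exp p A u = - lyap p A" using \<open>line_exp p A u < 0\<close> ly by simp
    ultimately show ?thesis using gen[OF v u] by blast
  qed
  then have Pe: "P (e_plus p A)" unfolding e_plus_def P_def by (rule someI_ex)
  then obtain f where f: "norm f = 1" "inv_line A f" "\<not> (\<exists>c. f = c *\<^sub>R e_plus p A)"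
    unfolding P_def by blast
  have e0: "e_plus p A \<noteq> 0" using Pe unfolding P_def by auto
  have "det2 (e_plus p A) f \<noteq> 0" using f(3) np_det2[OF e0] by blast
  moreover have "norm (e_plus p A) = 1" "inv_line A (e_plus p A)" "line_exp p A (e_plus p A) = lyap p A"
    using Pe unfolding P_def by auto
  ultimately show ?thesis using that f(1,2) by blast
qed

end

theorem proposition3p6:
  fixes p :: "'k::finite \<Rightarrow> real" and A :: "'k \<Rightarrow> mat2"
  assumes "\<forall>j. p j > 0" and "(\<Sum>j\<in>UNIV. p j) = 1"
    and "A \<in> Diag" and "lyap p A > 0"
  shows "\<exists>\<epsilon>>0. \<exists>C::real.
    (\<forall>B\<in>SL2k. dcoc B A < \<epsilon> \<longrightarrow> (\<forall>i\<in>Sigma_H p A. hyperbolic (B i))) \<and>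
    (\<forall>B\<in>SL2k. dcoc B A < \<epsilon> \<longrightarrow>
        dDiag B \<le> C * rho p A B \<and> rho p A B \<le> C * dcoc B A) \<and>
    (\<forall>B\<in>SL2k. dcoc B A < \<epsilon> \<longrightarrow>
        dDiag B \<le> C * rho_minus p A B \<or> dDiag B \<le> C * rho_minus p A (coc_inv B))"
proof -
  note ppos = assms(1) and psum = assms(2) and AD = assms(3) and Lp = assms(4)
  define e where "e = e_plus p A"
  obtain f where ne: "norm e = 1" and nf: "norm f = 1" and D0: "det2 e f \<noteq> 0"
    and ie: "inv_line A e" and iff: "inv_line A f" and le: "line_exp p A e = lyap p A"
    using setup_e[OF ppos psum AD Lp] unfolding e_def by blast
  define L where "L = lyap p A"
  define h where "h = exp L"
  have h1: "h > 1" unfolding h_def L_def using Lp by simp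
  define a where "a j = line_eig A e j" for j
  define c where "c j = line_eig A f j" for j
  have Ae: "A j *v e = a j *\<^sub>R e" for j unfolding a_def by (rule inv_line_eig[OF ie])
  have Af: "A j *v f = c j *\<^sub>R f" for j unfolding c_def by (rule inv_line_eig[OF iff])
  have dtA: "\<bar>det (A j)\<bar> = 1" for j using AD unfolding Diag_def SL2k_def by blast
  have ac: "a j * c j = det (A j)" for j unfolding a_def c_def by (rule eig_prod[OF ie iff D0])
  have aca: "\<bar>a j\<bar> * \<bar>c j\<bar> = 1" for j using ac[of j] dtA[of j] by (simp add: abs_mult[symmetric])
  have anz: "a j \<noteq> 0" and cnz: "c j \<noteq> 0" for j using aca[of j] by auto
  have SH: "Sigma_H p A = {i. \<bar>a i\<bar> \<ge> h}"
    unfolding Sigma_H_def a_def h_def L_def e_def ..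
  have SHne: "Sigma_H p A \<noteq> {}"
  proof
    assume em: "Sigma_H p A = {}"
    have lt: "ln \<bar>a j\<bar> < L" for j
    proof -
      have "\<not> h \<le> \<bar>a j\<bar>" using em unfolding SH by auto
      then have "\<bar>a j\<bar> < h" by simp
      moreover have "\<bar>a j\<bar> > 0" using anz[of j] by simp
      ultimately show ?thesis unfolding h_def by (metis ln_exp ln_less_cancel_iff exp_gt_zero)
    qed
    have "L = (\<Sum>j\<in>UNIV. p j * ln \<bar>a j\<bar>)" using le unfolding line_exp_def a_def L_def by simp
    also have "\<dots> < (\<Sum>j\<in>UNIV. p j * L)"
      using lt ppos by (intro sum_strict_mono mult_strict_left_mono) auto
    also have "\<dots> = L" using psum by (simp add: sum_distrib_right[symmetric])
    finally show False by simp
  qed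
  have aH: "\<bar>a i\<bar> \<ge> h" if "i \<in> Sigma_H p A" for i using that unfolding SH by simp
  have cH: "\<bar>c i\<bar> \<le> 1 / h" if "i \<in> Sigma_H p A" for i
  proof -
    have "\<bar>c i\<bar> = 1 / \<bar>a i\<bar>" using aca[of i] anz[of i] by (simp add: field_simps)
    also have "\<dots> \<le> 1 / h" using aH[OF that] h1 by (intro divide_left_mono) auto
    finally show ?thesis .
  qed
  define Dl where "Dl = det2 e f"
  have aDl: "\<bar>Dl\<bar> > 0" using D0 unfolding Dl_def by simp
  define SA where "SA = (\<Sum>j\<in>UNIV. Sm (A j))"
  have SmA: "Sm (A j) \<le> SA" for j unfolding SA_def by (rule member_le_sum) (auto simp: Sm_ge0)
  have SA0: "SA \<ge> 0" using SmA[of undefined] Sm_ge0[of "A undefined"] by linarith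
  define SB where "SB = SA + 4"
  have SBp: "SB > 0" unfolding SB_def using SA0 by simp
  define c0 where "c0 = h / (h - 1)"
  have c0p: "c0 > 0" unfolding c0_def using h1 by simp
  define K1 where "K1 = (\<Sum>j\<in>UNIV. \<bar>a j - c j\<bar>) / \<bar>Dl\<bar>"
  have K1j: "\<bar>a j - c j\<bar> / \<bar>Dl\<bar> \<le> K1" for j unfolding K1_def
    using aDl by (intro divide_right_mono member_le_sum) auto
  have K10: "K1 \<ge> 0" using K1j[of undefined] aDl by (smt (verit) divide_nonneg_pos abs_ge_zero)
  define C2 where "C2 = (K1 * c0 + 1) * SB"
  have C2p: "C2 > 0" unfolding C2_def using K10 c0p SBp by (simp add: add_nonneg_pos)
  define mh where "mh = (h^2 - 1) * (1 - 1 / h^2)"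
  have h2: "h^2 > 1" using h1 by (simp add: one_less_power)
  have mhp: "mh > 0" unfolding mh_def
  proof (rule mult_pos_pos)
    show "0 < h^2 - 1" using h2 by simp
    have "1 / h^2 < 1" using h2 by (simp add: divide_less_eq)
    then show "0 < 1 - 1 / h^2" by simp
  qed
  define dl where "dl = \<bar>Dl\<bar> / 2"
  have dlp: "dl > 0" unfolding dl_def using aDl by simp
  define C3 where "C3 = SB * (2 + 2 * SB / (3 * dl)) / dl^2"
  have C3p: "C3 \<ge> 0" unfolding C3_def using SBp dlp by simp
  define \<epsilon> where "\<epsilon> = min (min 1 (1 / (SA + 2))) (min (mh / (4 * (SA + 1))) (min (\<bar>Dl\<bar> / (4 * c0)) (\<bar>Dl\<bar> / (4 * C2 * SB))))"
  have ep: "\<epsilon> > 0" unfolding \<epsilon>_def using SA0 mhp aDl c0p C2p SBp by simp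
  define C where "C = C2 + C3 * (1 + SB^2)"
  have CC2: "C2 \<le> C" and CC3: "C3 \<le> C" and CC3b: "C3 * SB^2 \<le> C"
    unfolding C_def using C3p C2p by (auto simp: algebra_simps)
  have epsle: "\<epsilon> \<le> 1" "\<epsilon> \<le> 1 / (SA + 2)" "\<epsilon> \<le> mh / (4 * (SA + 1))"
      "\<epsilon> \<le> \<bar>Dl\<bar> / (4 * c0)" "\<epsilon> \<le> \<bar>Dl\<bar> / (4 * C2 * SB)"
    unfolding \<epsilon>_def by (simp_all add: min_le_iff_disj)
  have key: "(\<forall>i\<in>Sigma_H p A. hyperbolic (B i)) \<and>
      (dDiag B \<le> C * rho p A B \<and> rho p A B \<le> C * dcoc B A) \<and>
      (dDiag B \<le> C * rho_minus p A B \<or> dDiag B \<le> C * rho_minus p A (coc_inv B))"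
    if BS: "B \<in> SL2k" and Bd: "dcoc B A < \<epsilon>" for B
  proof -
    define d where "d = dcoc B A"
    have d0: "d \<ge> 0" unfolding d_def by (rule dcoc_nonneg)
    have de: "d < \<epsilon>" unfolding d_def by (rule Bd)
    have dj: "mnorm (B j - A j) \<le> d" for j unfolding d_def by (rule dcoc_ge)
    have d1: "d < 1" using de epsle by simp
    have dtB: "\<bar>det (B j)\<bar> = 1" for j using BS unfolding SL2k_def by blast
    have SmB: "Sm (B j) \<le> SB" for j
      using Sm_diff[of "B j" "A j"] SmA[of j] dj[of j] d1 unfolding SB_def by linarith
    have hypB: "hyperbolic (B i)" if iH: "i \<in> Sigma_H p A" for i
    proof -
      define t where "t = A i $1$1 + A i $2$2"
      define t' where "t' = B i $1$1 + B i $2$2"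
      define di where "di = mnorm (B i - A i)"
      have di: "di \<le> d" "di \<ge> 0" unfolding di_def using dj mnorm_ge0 by auto
      have tr: "t = a i + c i"
      proof -
        have "det2 (A i *v e) f + det2 e (A i *v f) = t * det2 e f" unfolding t_def by (rule trace_ident)
        then have "(a i + c i) * det2 e f = t * det2 e f" unfolding Ae Af by (simp add: algebra_simps)
        then show ?thesis using D0 by simp
      qed
      have m: "t^2 - (1 + det (A i))^2 = ((a i)^2 - 1) * (1 - (c i)^2)"
        unfolding tr ac[symmetric] by (simp add: power2_eq_square algebra_simps)
      have a2: "(a i)^2 \<ge> h^2"
      proof -
        have "h^2 \<le> \<bar>a i\<bar>^2" using aH[OF iH] h1 by (intro power_mono) auto
        then show ?thesis by simp
      qed
      have c2: "(c i)^2 \<le> 1 / h^2"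
      proof -
        have "\<bar>c i\<bar>^2 \<le> (1/h)^2" using cH[OF iH] by (intro power_mono) auto
        then show ?thesis by (simp add: power_divide)
      qed
      have mge: "t^2 - (1 + det (A i))^2 \<ge> mh"
        unfolding m mh_def using a2 c2 h2
        by (intro mult_mono) (auto simp: divide_le_eq)
      have tSA: "\<bar>t\<bar> \<le> SA" using SmA[of i] unfolding t_def Sm_def by linarith
      have tt: "\<bar>t' - t\<bar> \<le> 2 * di" unfolding t_def t'_def di_def by (rule trace_diff)
      have sq: "\<bar>t'^2 - t^2\<bar> \<le> 4 * di * (\<bar>t\<bar> + 1)"
      proof -
        have "\<bar>t' + t\<bar> \<le> 2 * \<bar>t\<bar> + 2" using tt di d1 by linarith
        have "t'^2 - t^2 = (t' - t) * (t' + t)" by (simp add: power2_eq_square algebra_simps)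
        then have "\<bar>t'^2 - t^2\<bar> = \<bar>t' - t\<bar> * \<bar>t' + t\<bar>" by (simp add: abs_mult)
        also have "\<dots> \<le> (2 * di) * (2 * \<bar>t\<bar> + 2)"
          using tt \<open>\<bar>t' + t\<bar> \<le> 2 * \<bar>t\<bar> + 2\<close> by (intro mult_mono) auto
        finally show ?thesis by (simp add: algebra_simps)
      qed
      have "4 * di * (\<bar>t\<bar> + 1) \<le> 4 * d * (SA + 1)"
        using di tSA d0 by (intro mult_mono) auto
      also have "\<dots> < 4 * \<epsilon> * (SA + 1)" using de SA0 by simp
      also have "\<dots> \<le> mh" using epsle(3) SA0 by (simp add: field_simps)
      finally have sm: "4 * di * (\<bar>t\<bar> + 1) < mh" .
      have detEq: "det (B i) = det (A i)"
      proof -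
        have "\<bar>det (B i) - det (A i)\<bar> \<le> di * (Sm (A i) + 2)"
          unfolding di_def using det_diff[of "B i" "A i"] di d1 unfolding di_def by simp
        also have "\<dots> \<le> d * (SA + 2)" using di SmA[of i] Sm_ge0[of "A i"] by (intro mult_mono) auto
        also have "\<dots> < \<epsilon> * (SA + 2)" using de SA0 by simp
        also have "\<dots> \<le> 1" using epsle(2) SA0 by (simp add: field_simps)
        finally have "\<bar>det (B i) - det (A i)\<bar> < 1" .
        then show ?thesis using dtB[of i] dtA[of i] by (auto simp: abs_if split: if_splits)
      qed
      have "t'^2 > (1 + det (B i))^2" unfolding detEq using sq sm mge by linarith
      then show ?thesis using hyperbolic_crit[OF dtB[of i]] unfolding t'_def by simp
    qed
    have pc: "\<bar>det2 e v\<bar> \<le> c0 * d * norm v"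
      if iH: "i \<in> Sigma_H p A" and Bv: "B i *v v = lam *\<^sub>R v" and l1: "\<bar>lam\<bar> > 1" for i v lam
    proof -
      have "\<bar>lam - c i\<bar> * \<bar>det2 e v\<bar> \<le> norm e * mnorm (B i - A i) * norm v"
        by (rule eig_close[OF Ae anz ac Bv])
      also have "\<dots> \<le> d * norm v" using ne dj[of i] by (simp add: mult_right_mono)
      finally have h0: "\<bar>lam - c i\<bar> * \<bar>det2 e v\<bar> \<le> d * norm v" .
      have "\<bar>lam - c i\<bar> \<ge> 1 - 1 / h" using cH[OF iH] l1 by linarith
      moreover have "1 - 1 / h = 1 / c0" unfolding c0_def using h1 by (simp add: field_simps)
      ultimately have "\<bar>lam - c i\<bar> \<ge> 1 / c0" by simp
      then have "(1 / c0) * \<bar>det2 e v\<bar> \<le> d * norm v" using h0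
        by (meson abs_ge_zero mult_right_mono order_trans)
      then show ?thesis using c0p by (simp add: field_simps)
    qed
    have mc: "\<bar>det2 f v\<bar> \<le> c0 * d * norm v"
      if iH: "i \<in> Sigma_H p A" and Bv: "B i *v v = lam *\<^sub>R v" and l1: "\<bar>lam\<bar> < 1" for i v lam
    proof -
      have "\<bar>lam - a i\<bar> * \<bar>det2 f v\<bar> \<le> norm f * mnorm (B i - A i) * norm v"
        by (rule eig_close[OF Af cnz _ Bv]) (simp add: ac[symmetric] mult.commute)
      also have "\<dots> \<le> d * norm v" using nf dj[of i] by (simp add: mult_right_mono)
      finally have h0: "\<bar>lam - a i\<bar> * \<bar>det2 f v\<bar> \<le> d * norm v" .
      have "\<bar>lam - a i\<bar> \<ge> h - 1" using aH[OF iH] l1 by linarith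
      moreover have "h - 1 \<ge> 1 / c0"
      proof -
        have "(h - 1) * 1 \<le> (h - 1) * h" using h1 by (intro mult_left_mono) auto
        then have "(h - 1) / h \<le> h - 1" using h1 by (simp add: divide_le_eq)
        then show ?thesis unfolding c0_def by simp
      qed
      ultimately have "\<bar>lam - a i\<bar> \<ge> 1 / c0" by simp
      then have "(1 / c0) * \<bar>det2 f v\<bar> \<le> d * norm v" using h0
        by (meson abs_ge_zero mult_right_mono order_trans)
      then show ?thesis using c0p by (simp add: field_simps)
    qed
    have pdB: "pdist (B j *v v) v \<le> C2 * d"
      if v0: "v \<noteq> 0" and cl: "\<bar>det2 e v\<bar> \<le> c0 * d * norm v \<or> \<bar>det2 f v\<bar> \<le> c0 * d * norm v" for j v
    proof -
      have qf: "det2 (A j *v v) v = (a j - c j) * det2 v f * det2 e v / Dl"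
        unfolding Dl_def by (rule quad_form[OF Ae Af D0])
      have "\<bar>det2 v f\<bar> * \<bar>det2 e v\<bar> \<le> c0 * d * (norm v)^2"
      proof (cases "\<bar>det2 e v\<bar> \<le> c0 * d * norm v")
        case True
        have "\<bar>det2 v f\<bar> \<le> norm v" using det2_le[of v f] nf by simp
        then have "\<bar>det2 v f\<bar> * \<bar>det2 e v\<bar> \<le> norm v * (c0 * d * norm v)"
          using True by (intro mult_mono) auto
        then show ?thesis by (simp add: power2_eq_square algebra_simps)
      next
        case False
        then have F: "\<bar>det2 f v\<bar> \<le> c0 * d * norm v" using cl by simp
        have "\<bar>det2 e v\<bar> \<le> norm v" using det2_le[of e v] ne by simp
        then have "\<bar>det2 v f\<bar> * \<bar>det2 e v\<bar> \<le> (c0 * d * norm v) * norm v"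
          using F by (intro mult_mono) (auto simp: det2_swap[of v f])
        then show ?thesis by (simp add: power2_eq_square algebra_simps)
      qed
      then have "\<bar>det2 (A j *v v) v\<bar> \<le> K1 * c0 * d * (norm v)^2"
      proof -
        assume H: "\<bar>det2 v f\<bar> * \<bar>det2 e v\<bar> \<le> c0 * d * (norm v)^2"
        have "\<bar>det2 (A j *v v) v\<bar> = (\<bar>a j - c j\<bar> / \<bar>Dl\<bar>) * (\<bar>det2 v f\<bar> * \<bar>det2 e v\<bar>)"
          unfolding qf by (simp add: abs_mult abs_divide)
        also have "\<dots> \<le> K1 * (c0 * d * (norm v)^2)"
          by (rule mult_mono[OF K1j[of j] H K10]) simp
        finally show ?thesis by (simp add: mult.assoc)
      qed
      then have "\<bar>det2 (B j *v v) v\<bar> \<le> (K1 * c0 + 1) * d * (norm v)^2"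
        using det2_pert[of "B j" v "A j"] dj[of j] mult_right_mono[OF dj[of j], of "(norm v)^2"]
        by (simp add: algebra_simps)
      moreover have "pdist (B j *v v) v \<le> Sm (B j) * \<bar>det2 (B j *v v) v\<bar> / (norm v)^2"
        by (rule pdist_bound[OF dtB v0])
      ultimately have "pdist (B j *v v) v \<le> SB * ((K1 * c0 + 1) * d * (norm v)^2) / (norm v)^2"
        using SmB[of j] Sm_ge0[of "B j"] v0
        by (smt (verit) abs_ge_zero divide_right_mono mult_mono zero_le_power2)
      also have "\<dots> = C2 * d" unfolding C2_def using v0 by (simp add: field_simps)
      finally show ?thesis .
    qed
    have pd0: "pdist u w \<ge> 0" for u w unfolding pdist_def by simp
    have vpp: "edir_plus (B i) \<noteq> 0 \<and> (\<exists>l. \<bar>l\<bar> > 1 \<and> B i *v edir_plus (B i) = l *\<^sub>R edir_plus (B i))"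
      if "i \<in> Sigma_H p A" for i by (rule edir_plus_prop[OF hypB[OF that]])
    have vmp: "edir_minus (B i) \<noteq> 0 \<and> (\<exists>l. \<bar>l\<bar> < 1 \<and> B i *v edir_minus (B i) = l *\<^sub>R edir_minus (B i))"
      if "i \<in> Sigma_H p A" for i by (rule edir_minus_prop[OF hypB[OF that]])
    have rp: "rho_plus p A B \<le> C2 * d"
      unfolding rho_plus_def
    proof (rule Max_pairs_le[OF SHne])
      fix i j assume iH: "i \<in> Sigma_H p A"
      obtain l where v0: "edir_plus (B i) \<noteq> 0" and l: "\<bar>l\<bar> > 1" "B i *v edir_plus (B i) = l *\<^sub>R edir_plus (B i)"
        using vpp[OF iH] by blast
      show "pdist (B j *v edir_plus (B i)) (edir_plus (B i)) \<le> C2 * d"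
        using pdB[OF v0] pc[OF iH l(2) l(1)] by blast
    qed
    have rm: "rho_minus p A B \<le> C2 * d"
      unfolding rho_minus_def
    proof (rule Max_pairs_le[OF SHne])
      fix i j assume iH: "i \<in> Sigma_H p A"
      obtain l where v0: "edir_minus (B i) \<noteq> 0" and l: "\<bar>l\<bar> < 1" "B i *v edir_minus (B i) = l *\<^sub>R edir_minus (B i)"
        using vmp[OF iH] by blast
      show "pdist (B j *v edir_minus (B i)) (edir_minus (B i)) \<le> C2 * d"
        using pdB[OF v0] mc[OF iH l(2) l(1)] by blast
    qed
    obtain i0 where i0: "i0 \<in> Sigma_H p A" using SHne by blast
    have rpge: "pdist (B j *v edir_plus (B i)) (edir_plus (B i)) \<le> rho_plus p A B"
      if "i \<in> Sigma_H p A" for i j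
      unfolding rho_plus_def by (rule Max_pairs_ge[OF that])
    have rmge: "pdist (B j *v edir_minus (B i)) (edir_minus (B i)) \<le> rho_minus p A B"
      if "i \<in> Sigma_H p A" for i j
      unfolding rho_minus_def by (rule Max_pairs_ge[OF that])
    have rp0: "rho_plus p A B \<ge> 0" using rpge[OF i0, of undefined] pd0 by (meson order_trans)
    have rm0: "rho_minus p A B \<ge> 0" using rmge[OF i0, of undefined] pd0 by (meson order_trans)
    have rho_le: "rho p A B \<le> C2 * d" unfolding rho_def using rp rm by simp
    have rho0: "rho p A B \<ge> 0" unfolding rho_def using rp0 by simp
    have dD: "dDiag B \<le> C3 * rho p A B"
    proof -
      define vp where "vp = edir_plus (B i0)"
      define vm where "vm = edir_minus (B i0)"
      obtain lp where vp0: "vp \<noteq> 0" and lp: "\<bar>lp\<bar> > 1" "B i0 *v vp = lp *\<^sub>R vp"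
        using vpp[OF i0] unfolding vp_def by blast
      obtain lm where vm0: "vm \<noteq> 0" and lm: "\<bar>lm\<bar> < 1" "B i0 *v vm = lm *\<^sub>R vm"
        using vmp[OF i0] unfolding vm_def by blast
      define sx where "sx = 1 / norm vp"
      define sy where "sy = 1 / norm vm"
      have sx0: "sx \<noteq> 0" "sx > 0" and sy0: "sy \<noteq> 0" "sy > 0" unfolding sx_def sy_def using vp0 vm0 by auto
      define x where "x = sx *\<^sub>R vp"
      define y where "y = sy *\<^sub>R vm"
      have nx: "norm x = 1" and ny: "norm y = 1" unfolding x_def y_def sx_def sy_def using vp0 vm0 by simp_all
      have x0: "x \<noteq> 0" and y0: "y \<noteq> 0" using nx ny by auto
      have ex: "\<bar>det2 e x\<bar> \<le> c0 * d"
      proof -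
        have "\<bar>det2 e vp\<bar> \<le> c0 * d * norm vp" by (rule pc[OF i0 lp(2) lp(1)])
        then have "sx * \<bar>det2 e vp\<bar> \<le> sx * (c0 * d * norm vp)" using sx0 by (intro mult_left_mono) auto
        then show ?thesis unfolding x_def using sx0 vp0 unfolding sx_def by (simp add: abs_mult)
      qed
      have fy: "\<bar>det2 f y\<bar> \<le> c0 * d"
      proof -
        have "\<bar>det2 f vm\<bar> \<le> c0 * d * norm vm" by (rule mc[OF i0 lm(2) lm(1)])
        then have "sy * \<bar>det2 f vm\<bar> \<le> sy * (c0 * d * norm vm)" using sy0 by (intro mult_left_mono) auto
        then show ?thesis unfolding y_def using sy0 vm0 unfolding sy_def by (simp add: abs_mult)
      qed
      have cd: "c0 * d \<le> \<bar>Dl\<bar> / 4"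
      proof -
        have "c0 * d \<le> c0 * \<epsilon>" using de c0p by simp
        also have "\<dots> \<le> c0 * (\<bar>Dl\<bar> / (4 * c0))" using epsle(4) c0p by (intro mult_left_mono) auto
        also have "\<dots> = \<bar>Dl\<bar> / 4" using c0p by simp
        finally show ?thesis .
      qed
      have fx: "\<bar>det2 f x\<bar> \<ge> \<bar>Dl\<bar> - c0 * d"
        using det2_lower[OF ne nf nx D0] ex unfolding Dl_def by linarith
      have ey: "\<bar>det2 e y\<bar> \<ge> \<bar>Dl\<bar> - c0 * d"
      proof -
        have D1: "det2 f e \<noteq> 0" using D0 by (simp add: det2_swap[of f e])
        have "\<bar>det2 e y\<bar> \<ge> \<bar>det2 f e\<bar> - \<bar>det2 f y\<bar>" by (rule det2_lower[OF nf ne ny D1])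
        then show ?thesis using fy unfolding Dl_def by (simp add: det2_swap[of f e])
      qed
      have Dxy: "dl \<le> \<bar>det2 x y\<bar>"
      proof -
        have pos: "\<bar>Dl\<bar> - c0 * d \<ge> 0" using cd aDl by linarith
        have "(\<bar>Dl\<bar> - c0 * d) * (\<bar>Dl\<bar> - c0 * d) \<le> \<bar>det2 e y\<bar> * \<bar>det2 f x\<bar>"
          using ey fx pos by (intro mult_mono) auto
        moreover have "\<bar>det2 e x\<bar> * \<bar>det2 f y\<bar> \<le> (c0 * d) * (c0 * d)"
          using ex fy c0p d0 by (intro mult_mono) auto
        moreover have "\<bar>Dl\<bar> * \<bar>det2 x y\<bar> \<ge> \<bar>det2 e y\<bar> * \<bar>det2 f x\<bar> - \<bar>det2 e x\<bar> * \<bar>det2 f y\<bar>"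
        proof -
          have "\<bar>Dl\<bar> * \<bar>det2 x y\<bar> = \<bar>det2 e x * det2 f y - det2 e y * det2 f x\<bar>"
            unfolding Dl_def det2_plucker by (simp add: abs_mult)
          also have "\<dots> \<ge> \<bar>det2 e y * det2 f x\<bar> - \<bar>det2 e x * det2 f y\<bar>" by linarith
          finally show ?thesis by (simp add: abs_mult)
        qed
        ultimately have "\<bar>Dl\<bar> * \<bar>det2 x y\<bar> \<ge> (\<bar>Dl\<bar> - c0 * d) * (\<bar>Dl\<bar> - c0 * d) - (c0 * d) * (c0 * d)"
          by linarith
        also have "(\<bar>Dl\<bar> - c0 * d) * (\<bar>Dl\<bar> - c0 * d) - (c0 * d) * (c0 * d) = \<bar>Dl\<bar> * (\<bar>Dl\<bar> - 2 * (c0 * d))"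
          by (simp add: algebra_simps)
        finally have "\<bar>Dl\<bar> * (\<bar>Dl\<bar> - 2 * (c0 * d)) \<le> \<bar>Dl\<bar> * \<bar>det2 x y\<bar>" .
        then have "\<bar>Dl\<bar> - 2 * (c0 * d) \<le> \<bar>det2 x y\<bar>" using aDl by simp
        then show ?thesis unfolding dl_def using cd by linarith
      qed
      define eta where "eta = SB * rho p A B"
      have Bx: "\<bar>det2 (B j *v x) x\<bar> \<le> eta" for j
      proof -
        have Bvp0: "B j *v vp \<noteq> 0" using Sm_inv_bound[OF dtB[of j], of vp] vp0 by auto
        have Bx0: "B j *v x \<noteq> 0" using Bvp0 sx0 unfolding x_def mv_scaleR by simp
        have "pdist (B j *v x) x = pdist (B j *v vp) vp"
          unfolding x_def mv_scaleR by (rule pdist_scale[OF Bvp0 vp0 sx0(1) sx0(1)])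
        also have "\<dots> \<le> rho p A B" using rpge[OF i0, of j] unfolding vp_def rho_def by simp
        finally have pr: "pdist (B j *v x) x \<le> rho p A B" .
        have "\<bar>det2 (B j *v x) x\<bar> = pdist (B j *v x) x * norm (B j *v x)"
          using pdist_eq[OF Bx0 x0] nx Bx0 by simp
        also have "\<dots> \<le> rho p A B * SB"
        proof (rule mult_mono[OF pr])
          show "norm (B j *v x) \<le> SB" using Sm_bound[of "B j" x] nx SmB[of j] by simp
        qed (auto simp: rho0 pd0)
        finally show ?thesis unfolding eta_def by (simp add: mult.commute)
      qed
      have By: "\<bar>det2 (B j *v y) y\<bar> \<le> eta" for j
      proof -
        have Bvm0: "B j *v vm \<noteq> 0" using Sm_inv_bound[OF dtB[of j], of vm] vm0 by auto
        have By0: "B j *v y \<noteq> 0" using Bvm0 sy0 unfolding y_def mv_scaleR by simp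
        have "pdist (B j *v y) y = pdist (B j *v vm) vm"
          unfolding y_def mv_scaleR by (rule pdist_scale[OF Bvm0 vm0 sy0(1) sy0(1)])
        also have "\<dots> \<le> rho p A B" using rmge[OF i0, of j] unfolding vm_def rho_def by simp
        finally have pr: "pdist (B j *v y) y \<le> rho p A B" .
        have "\<bar>det2 (B j *v y) y\<bar> = pdist (B j *v y) y * norm (B j *v y)"
          using pdist_eq[OF By0 y0] ny By0 by simp
        also have "\<dots> \<le> rho p A B * SB"
        proof (rule mult_mono[OF pr])
          show "norm (B j *v y) \<le> SB" using Sm_bound[of "B j" y] ny SmB[of j] by simp
        qed (auto simp: rho0 pd0)
        finally show ?thesis unfolding eta_def by (simp add: mult.commute)
      qed
      have small: "eta / dl \<le> 1/2"
      proof -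
        have "eta \<le> SB * (C2 * d)" unfolding eta_def using rho_le SBp by (intro mult_left_mono) auto
        also have "\<dots> \<le> SB * (C2 * \<epsilon>)" using de SBp C2p by (intro mult_left_mono) auto
        also have "\<dots> \<le> SB * (C2 * (\<bar>Dl\<bar> / (4 * C2 * SB)))"
          using epsle(5) SBp C2p by (intro mult_left_mono) auto
        also have "\<dots> = dl / 2" unfolding dl_def using SBp C2p by (simp add: field_simps)
        finally show ?thesis using dlp by (simp add: field_simps)
      qed
      have "\<forall>j. \<exists>N. \<bar>det N\<bar> = 1 \<and> (\<exists>al. N *v x = al *\<^sub>R x) \<and> (\<exists>de. N *v y = de *\<^sub>R y) \<and>
          mnorm (B j - N) \<le> (eta / dl^2) * (2 + 2 * SB / (3 * dl))"
      proof
        fix j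
        show "\<exists>N. \<bar>det N\<bar> = 1 \<and> (\<exists>al. N *v x = al *\<^sub>R x) \<and> (\<exists>de. N *v y = de *\<^sub>R y) \<and>
          mnorm (B j - N) \<le> (eta / dl^2) * (2 + 2 * SB / (3 * dl))"
          using diag_approx[OF nx ny dlp Dxy dtB[of j] SmB[of j] Bx[of j] By[of j] small] by blast
      qed
      then obtain N where N: "\<And>j. \<bar>det (N j)\<bar> = 1" "\<And>j. \<exists>al. N j *v x = al *\<^sub>R x"
        "\<And>j. \<exists>de. N j *v y = de *\<^sub>R y" "\<And>j. mnorm (B j - N j) \<le> (eta / dl^2) * (2 + 2 * SB / (3 * dl))"
        by metis
      have ND: "N \<in> Diag"
      proof -
        have "N \<in> SL2k" unfolding SL2k_def using N(1) by blast
        moreover have "inv_line N x" unfolding inv_line_def using x0 N(2) by blast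
        moreover have "inv_line N y" unfolding inv_line_def using y0 N(3) by blast
        moreover have "\<not> (\<exists>c. y = c *\<^sub>R x)" using np_det2[OF x0] Dxy dlp by auto
        ultimately show ?thesis unfolding Diag_def by blast
      qed
      have "dDiag B \<le> dcoc B N" by (rule dDiag_le[OF ND])
      also have "\<dots> \<le> (eta / dl^2) * (2 + 2 * SB / (3 * dl))" by (rule dcoc_le) (rule N(4))
      also have "\<dots> = C3 * rho p A B" unfolding eta_def C3_def by (simp add: field_simps)
      finally show ?thesis .
    qed
    have rinv: "rho_plus p A B \<le> SB^2 * rho_minus p A (coc_inv B)"
      unfolding rho_plus_def
    proof (rule Max_pairs_le[OF SHne])
      fix i j assume iH: "i \<in> Sigma_H p A"
      define vp where "vp = edir_plus (B i)"
      define vm where "vm = edir_minus (B i)"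
      obtain lp where vp0: "vp \<noteq> 0" and lp: "\<bar>lp\<bar> > 1" "B i *v vp = lp *\<^sub>R vp"
        using vpp[OF iH] unfolding vp_def by blast
      obtain lm where vm0: "vm \<noteq> 0" and lm: "\<bar>lm\<bar> < 1" "B i *v vm = lm *\<^sub>R vm"
        using vmp[OF iH] unfolding vm_def by blast
      have di0: "det (B i) \<noteq> 0" using dtB[of i] by auto
      let ?Bi = "matrix_inv (B i)"
      have inv1: "?Bi *v (B i *v z) = z" for z by (rule matrix_inv_apply(2)[OF di0])
      have inv2: "B i *v (?Bi *v z) = z" for z by (rule matrix_inv_apply(1)[OF di0])
      have lp0: "lp \<noteq> 0" using lp by auto
      have lm0: "lm \<noteq> 0"
      proof
        assume "lm = 0"
        then have "vm = ?Bi *v 0" using inv1[of vm] lm(2) by simp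
        then show False using vm0 by (simp add: matrix_vector_mult_0_right)
      qed
      have ivp: "?Bi *v vp = (1/lp) *\<^sub>R vp"
      proof -
        have E: "vp = lp *\<^sub>R (?Bi *v vp)" using inv1[of vp] lp(2) by (simp add: mv_scaleR)
        have "(1/lp) *\<^sub>R vp = ?Bi *v vp" using lp0 by (subst E) simp
        then show ?thesis by simp
      qed
      have ivm: "?Bi *v vm = (1/lm) *\<^sub>R vm"
      proof -
        have E: "vm = lm *\<^sub>R (?Bi *v vm)" using inv1[of vm] lm(2) by (simp add: mv_scaleR)
        have "(1/lm) *\<^sub>R vm = ?Bi *v vm" using lm0 by (subst E) simp
        then show ?thesis by simp
      qed
      have hBi: "hyperbolic ?Bi" unfolding hyperbolic_def
      proof (intro exI conjI)
        show "vm \<noteq> 0" "vp \<noteq> 0" by (fact vm0) (fact vp0)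
        show "?Bi *v vm = (1/lm) *\<^sub>R vm" "?Bi *v vp = (1/lp) *\<^sub>R vp" by (fact ivm) (fact ivp)
        show "\<bar>1/lm\<bar> > 1" using lm lm0 by (simp add: abs_divide)
        show "\<bar>1/lp\<bar> < 1" using lp by (simp add: abs_divide)
      qed
      define w where "w = edir_minus ?Bi"
      obtain l where w0: "w \<noteq> 0" and l: "\<bar>l\<bar> < 1" "?Bi *v w = l *\<^sub>R w"
        using edir_minus_prop[OF hBi] unfolding w_def by blast
      have l0: "l \<noteq> 0"
      proof
        assume "l = 0"
        then have "w = B i *v 0" using inv2[of w] l(2) by simp
        then show False using w0 by (simp add: matrix_vector_mult_0_right)
      qed
      have Bw: "B i *v w = (1/l) *\<^sub>R w"
      proof -
        have E: "w = l *\<^sub>R (B i *v w)" using inv2[of w] l(2) by (simp add: mv_scaleR)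
        have "(1/l) *\<^sub>R w = B i *v w" using l0 by (subst E) simp
        then show ?thesis by simp
      qed
      have "det2 w vp = 0"
      proof (rule eig_unique[OF Bw lp(2) lm(2) vm0])
        show "1 / l \<noteq> lm" using l l0 lm by (auto simp: abs_divide)
        show "lp \<noteq> lm" using lp lm by auto
      qed
      then have "det2 vp w = 0" by (simp add: det2_swap[of vp])
      then obtain sc where sc: "w = sc *\<^sub>R vp" using det2_zero_parallel[OF vp0] by blast
      have sc0: "sc \<noteq> 0" using sc w0 by auto
      have dj0: "det (B j) \<noteq> 0" using dtB[of j] by auto
      have Bjvp: "matrix_inv (B j) *v vp \<noteq> 0"
      proof
        assume "matrix_inv (B j) *v vp = 0"
        then have "vp = B j *v 0" using matrix_inv_apply(1)[OF dj0, of vp] by simp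
        then show False using vp0 by (simp add: matrix_vector_mult_0_right)
      qed
      have eqp: "pdist (coc_inv B j *v edir_minus (coc_inv B i)) (edir_minus (coc_inv B i))
          = pdist (matrix_inv (B j) *v vp) vp"
        unfolding coc_inv_def w_def[symmetric] sc mv_scaleR by (rule pdist_scale[OF Bjvp vp0 sc0 sc0])
      have "pdist (B j *v vp) vp \<le> (Sm (B j))^2 * pdist (matrix_inv (B j) *v vp) vp"
        by (rule pdist_inv[OF dtB vp0])
      also have "\<dots> \<le> SB^2 * pdist (matrix_inv (B j) *v vp) vp"
        using SmB[of j] Sm_ge0[of "B j"] pd0 by (intro mult_right_mono power_mono) auto
      also have "\<dots> \<le> SB^2 * rho_minus p A (coc_inv B)"
        using Max_pairs_ge[OF iH, of "\<lambda>i j. pdist (coc_inv B j *v edir_minus (coc_inv B i)) (edir_minus (coc_inv B i))" j]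
        unfolding rho_minus_def eqp by (intro mult_left_mono) auto
      finally show "pdist (B j *v edir_plus (B i)) (edir_plus (B i)) \<le> SB^2 * rho_minus p A (coc_inv B)"
        unfolding vp_def .
    qed
    have rmi0: "rho_minus p A (coc_inv B) \<ge> 0"
      using Max_pairs_ge[OF i0, of "\<lambda>i j. pdist (coc_inv B j *v edir_minus (coc_inv B i)) (edir_minus (coc_inv B i))" undefined]
        pd0 unfolding rho_minus_def by (meson order_trans)
    have part2: "dDiag B \<le> C * rho p A B \<and> rho p A B \<le> C * dcoc B A"
    proof
      show "dDiag B \<le> C * rho p A B" using dD CC3 rho0 by (meson mult_right_mono order_trans)
      show "rho p A B \<le> C * dcoc B A" using rho_le CC2 d0 unfolding d_def
        by (meson mult_right_mono order_trans)
    qed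
    have part3: "dDiag B \<le> C * rho_minus p A B \<or> dDiag B \<le> C * rho_minus p A (coc_inv B)"
    proof (cases "rho_plus p A B \<le> rho_minus p A B")
      case True
      then have "rho p A B = rho_minus p A B" unfolding rho_def by simp
      then have "dDiag B \<le> C3 * rho_minus p A B" using dD by simp
      also have "\<dots> \<le> C * rho_minus p A B" using CC3 rm0 by (rule mult_right_mono)
      finally show ?thesis by simp
    next
      case False
      then have "rho p A B = rho_plus p A B" unfolding rho_def by simp
      then have "dDiag B \<le> C3 * rho_plus p A B" using dD by simp
      also have "\<dots> \<le> C3 * (SB^2 * rho_minus p A (coc_inv B))" using rinv C3p by (rule mult_left_mono)
      also have "\<dots> = (C3 * SB^2) * rho_minus p A (coc_inv B)" by simp
      also have "\<dots> \<le> C * rho_minus p A (coc_inv B)" using CC3b rmi0 by (rule mult_right_mono)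
      finally show ?thesis by simp
    qed
    show ?thesis using hypB part2 part3 by blast
  qed
  have k1: "\<forall>B\<in>SL2k. dcoc B A < \<epsilon> \<longrightarrow> (\<forall>i\<in>Sigma_H p A. hyperbolic (B i))"
    using key by blast
  have k2: "\<forall>B\<in>SL2k. dcoc B A < \<epsilon> \<longrightarrow> dDiag B \<le> C * rho p A B \<and> rho p A B \<le> C * dcoc B A"
    using key by blast
  have k3: "\<forall>B\<in>SL2k. dcoc B A < \<epsilon> \<longrightarrow>
        dDiag B \<le> C * rho_minus p A B \<or> dDiag B \<le> C * rho_minus p A (coc_inv B)"
    using key by blast
  show ?thesis using ep k1 k2 k3 by blast
qed

end
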